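(* If $\Sigma\subseteq\mathcal L$ is finite and closed under subformulas, then the canonical quasimodel $\mathfrak C/\Sigma$ is a $\Sigma$-quasimodel; in particular its relation $R^+$ is $\omega$-sensible.
   Context: $\mathcal L$: formulas with $\wedge,\vee,\Rightarrow,\Leftarrow,\mathsf X,\mathsf Y,\mathsf G,\mathsf H,\mathsf U,\mathsf S$; $\top:=p_0\Rightarrow p_0$, $\bot:=p_0\Leftarrow p_0$, $\neg\varphi:=\varphi\Rightarrow\bot$. $\mathsf{GTL}$ is the Hilbert calculus: substitution instances of intuitionistic tautologies; $\varphi\Rightarrow(\psi\vee(\varphi\Leftarrow\psi))$; $(\varphi\Rightarrow\psi)\vee(\psi\Rightarrow\varphi)$; $\neg((\varphi\Leftarrow\psi)\wedge(\psi\Leftarrow\varphi))$; $\neg\mathsf X\bot$, $\mathsf X(\varphi\vee\psi)\Rightarrow(\mathsf X\varphi\vee\mathsf X\psi)$, $(\mathsf X\varphi\wedge\mathsf X\psi)\Rightarrow\mathsf X(\varphi\wedge\psi)$, $\mathsf X(\varphi\Rightarrow\psi)\Leftrightarrow(\mathsf X\varphi\Rightarrow\mathsf X\psi)$, $\mathsf G(\varphi\Rightarrow\psi)\Rightarrow(\mathsf G\varphi\Rightarrow\mathsf G\psi)$, $\mathsf G(\varphi\Rightarrow\psi)\Rightarrow(\theta\,\mathsf U\,\varphi\Rightarrow\theta\,\mathsf U\,\psi)$, $\mathsf G(\varphi\Rightarrow\psi)\Rightarrow(\varphi\,\mathsf U\,\theta\Rightarrow\psi\,\mathsf U\,\theta)$,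 $\mathsf G\varphi\Rightarrow\varphi\wedge\mathsf X\mathsf G\varphi$, $\psi\vee(\varphi\wedge\mathsf X(\varphi\,\mathsf U\,\psi))\Rightarrow\varphi\,\mathsf U\,\psi$, $\mathsf G(\varphi\Rightarrow\mathsf X\varphi)\Rightarrow(\varphi\Rightarrow\mathsf G\varphi)$, $\mathsf G(\psi\wedge\mathsf X\varphi\Rightarrow\varphi)\Rightarrow(\psi\,\mathsf U\,\varphi\Rightarrow\varphi)$ and their past versions (with $\mathsf Y,\mathsf H,\mathsf S$); $\varphi\Leftrightarrow\mathsf X\mathsf Y\varphi$, $\varphi\Leftrightarrow\mathsf Y\mathsf X\varphi$; rules: from $\varphi\Rightarrow\psi$ infer $(\varphi\Leftarrow\theta)\Rightarrow(\psi\Leftarrow\theta)$; from $\varphi\Rightarrow\psi\vee\gamma$ infer $(\varphi\Leftarrow\psi)\Rightarrow\gamma$; modus ponens; necessitation for $\mathsf X,\mathsf Y,\mathsf G,\mathsf H$. $\Gamma\vdash\Delta$ iff $\bigwedge\Gamma'\Rightarrow\bigvee\Delta'\in\mathsf{GTL}$ for finite $\Gamma'\subseteq\Gamma,\Delta'\subseteq\Delta$. $\Sigma$-types, $\Sigma$-labelled spaces, convex/fully confluent/bi-serial/sensible relations, $\Sigma$-labelled systems: for subformula-closed $\Sigma$, a $\Sigma$-type is $\Phi\subseteq\Sigma$ with the Boolean closure conditions for $\wedge,\vee$, ($\varphi\Rightarrow\psi\in\Phi$ implies $\varphi\notin\Phi$ or $\psi\in\Phi$; $\psi\in\Phi$ implies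 $\varphi\Rightarrow\psi\in\Phi$), ($\varphi\Leftarrow\psi\in\Phi$ implies $\varphi\in\Phi$; $\varphi\in\Phi,\psi\notin\Phi$ imply $\varphi\Leftarrow\psi\in\Phi$). A $\Sigma$-labelled space is $(W,\le,\ell)$ with $(W,\le)$ a disjoint union of linear posets, $\ell$ into $\Sigma$-types, $w\le v\Rightarrow\ell(w)\supseteq\ell(v)$, $\Rightarrow$-formulas outside $\ell(w)$ witnessed at some $v\le w$ ($\varphi\in\ell(v),\psi\notin\ell(v)$), $\Leftarrow$-formulas in $\ell(w)$ witnessed at some $v\ge w$. A relation $R$ is convex (images/preimages of points convex), fully confluent (forth–down: $x\le x'Ry'\Rightarrow\exists y\,xRy\le y'$; forth–up: $x'\ge xRy\Rightarrow\exists y'\,x'Ry'\ge y$; back–down: $x'Ry'\ge y\Rightarrow\exists x\,x'\ge xRy$; back–up: $xRy\le y'\Rightarrow\exists x'\,x\le x'Ry'$), bi-serial, and sensible (for each $wRv$: $\mathsf X\varphi\in\ell(w)\iff\varphi\in\ell(v)$; $\mathsf Y\varphi\in\ell(v)\iff\varphi\in\ell(w)$; $\mathsf G\varphi\in\ell(w)\iff\varphi\in\ell(w)\wedge\mathsf G\varphi\in\ell(v)$; $\mathsf H\varphi\in\ell(v)\iff\varphi\in\ell(v)\wedge\mathsf H\varphi\in\ell(w)$; $\varphi\,\mathsf U\,\psi\in\ell(w)\iff\psi\in\ell(w)\vee(\varphi\in\ell(w)\wedge\varphi\,\mathsf U\,\psi\in\ell(v))$; $\varphi\,\mathsf S\,\psi\in\ell(v)\iff\psi\in\ell(v)\vee(\varphi\in\ell(v)\wedge\varphi\,\mathsf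 S\,\psi\in\ell(w))$, for formulas in $\Sigma$). Labelled system: labelled space plus such a relation. $\omega$-sensible: $\mathsf G\varphi\in\Sigma\setminus\ell(w)$ gives $v$ with $wR^nv$, $\varphi\notin\ell(v)$; $\mathsf H\varphi\in\Sigma\setminus\ell(w)$ gives $v$ with $vR^nw$, $\varphi\notin\ell(v)$; $\varphi\,\mathsf U\,\psi\in\ell(w)$ gives $v$ with $wR^nv$, $\psi\in\ell(v)$; $\varphi\,\mathsf S\,\psi\in\ell(w)$ gives $v$ with $vR^nw$, $\psi\in\ell(v)$ ($n\ge0$). A $\Sigma$-quasimodel is a $\Sigma$-labelled system with $\omega$-sensible relation. Canonical quasimodel: $\mathrm{Type}_\infty$ is the set of $\mathcal L$-types $\Phi$ with $\Phi\nvdash\mathcal L\setminus\Phi$; $\Phi\le\Psi$ iff $\Phi\supseteq\Psi$; $\ell(\Phi)=\Phi\cap\Sigma$; $S(\Phi)=\{\varphi:\mathsf X\varphi\in\Phi\}$. $\mathfrak C/\Sigma$ is the quotient: $L(\Phi)=\{\ell(\Psi):\Psi\le\Phi$ or $\Phi\le\Psi\}$; $\Phi\sim\Psi$ iff $\ell$ and $L$ agree; $[\Phi]\le[\Psi]$ iff $L(\Phi)=L(\Psi)$ and $\ell(\Phi)\supseteq\ell(\Psi)$; $\ell([\Phi])=\ell(\Phi)$; $R_0$ smallest with $[\Phi]R_0[S(\Phi)]$; $XR^+Y$ iff there are $X_1\le X\le X_2$, $Y_1\le Y\le Y_2$ with $X_2R_0Y_1$ and $X_1R_0Y_2$. *)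

theory Defs
  imports Main
begin

datatype fm =
    Atom nat
  | And fm fm
  | Or fm fm
  | Imp fm fm
  | Coimp fm fm
  | TX fm | TY fm | TG fm | TH fm
  | TU fm fm
  | TS fm fm

definition top :: fm where "top = Imp (Atom 0) (Atom 0)"
definition bot :: fm where "bot = Coimp (Atom 0) (Atom 0)"
definition neg :: "fm \<Rightarrow> fm" where "neg \<phi> = Imp \<phi> bot"
definition iff :: "fm \<Rightarrow> fm \<Rightarrow> fm" where "iff \<phi> \<psi> = And (Imp \<phi> \<psi>) (Imp \<psi> \<phi>)"

fun subfs :: "fm \<Rightarrow> fm set" where
  "subfs (Atom n) = {Atom n}"
| "subfs (And a b) = insert (And a b) (subfs a \<union> subfs b)"
| "subfs (Or a b) = insert (Or a b) (subfs a \<union> subfs b)"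
| "subfs (Imp a b) = insert (Imp a b) (subfs a \<union> subfs b)"
| "subfs (Coimp a b) = insert (Coimp a b) (subfs a \<union> subfs b)"
| "subfs (TX a) = insert (TX a) (subfs a)"
| "subfs (TY a) = insert (TY a) (subfs a)"
| "subfs (TG a) = insert (TG a) (subfs a)"
| "subfs (TH a) = insert (TH a) (subfs a)"
| "subfs (TU a b) = insert (TU a b) (subfs a \<union> subfs b)"
| "subfs (TS a b) = insert (TS a b) (subfs a \<union> subfs b)"

definition subformula_closed :: "fm set \<Rightarrow> bool" where
  "subformula_closed \<Sigma> \<longleftrightarrow> (\<forall>\<phi>\<in>\<Sigma>. subfs \<phi> \<subseteq> \<Sigma>)"

datatype ipf = IVar nat | IBot | IAnd ipf ipf | IOr ipf ipf | IImp ipf ipf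

inductive ipc :: "ipf \<Rightarrow> bool" where
  ipc_K: "ipc (IImp a (IImp b a))"
| ipc_S: "ipc (IImp (IImp a (IImp b c)) (IImp (IImp a b) (IImp a c)))"
| ipc_and1: "ipc (IImp (IAnd a b) a)"
| ipc_and2: "ipc (IImp (IAnd a b) b)"
| ipc_and3: "ipc (IImp a (IImp b (IAnd a b)))"
| ipc_or1: "ipc (IImp a (IOr a b))"
| ipc_or2: "ipc (IImp b (IOr a b))"
| ipc_or3: "ipc (IImp (IImp a c) (IImp (IImp b c) (IImp (IOr a b) c)))"
| ipc_efq: "ipc (IImp IBot a)"
| ipc_mp: "ipc (IImp a b) \<Longrightarrow> ipc a \<Longrightarrow> ipc b"

fun isubst :: "(nat \<Rightarrow> fm) \<Rightarrow> ipf \<Rightarrow> fm" where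
  "isubst \<sigma> (IVar n) = \<sigma> n"
| "isubst \<sigma> IBot = bot"
| "isubst \<sigma> (IAnd a b) = And (isubst \<sigma> a) (isubst \<sigma> b)"
| "isubst \<sigma> (IOr a b) = Or (isubst \<sigma> a) (isubst \<sigma> b)"
| "isubst \<sigma> (IImp a b) = Imp (isubst \<sigma> a) (isubst \<sigma> b)"

inductive gtl :: "fm \<Rightarrow> bool" where
  int_taut: "ipc f \<Longrightarrow> gtl (isubst \<sigma> f)"
| ax_coimp: "gtl (Imp \<phi> (Or \<psi> (Coimp \<phi> \<psi>)))"
| ax_lin: "gtl (Or (Imp \<phi> \<psi>) (Imp \<psi> \<phi>))"
| ax_coimp_neg: "gtl (neg (And (Coimp \<phi> \<psi>) (Coimp \<psi> \<phi>)))"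
| ax_X_bot: "gtl (neg (TX bot))"
| ax_X_or: "gtl (Imp (TX (Or \<phi> \<psi>)) (Or (TX \<phi>) (TX \<psi>)))"
| ax_X_and: "gtl (Imp (And (TX \<phi>) (TX \<psi>)) (TX (And \<phi> \<psi>)))"
| ax_X_imp: "gtl (iff (TX (Imp \<phi> \<psi>)) (Imp (TX \<phi>) (TX \<psi>)))"
| ax_G_K: "gtl (Imp (TG (Imp \<phi> \<psi>)) (Imp (TG \<phi>) (TG \<psi>)))"
| ax_G_U2: "gtl (Imp (TG (Imp \<phi> \<psi>)) (Imp (TU \<theta> \<phi>) (TU \<theta> \<psi>)))"
| ax_G_U1: "gtl (Imp (TG (Imp \<phi> \<psi>)) (Imp (TU \<phi> \<theta>) (TU \<psi> \<theta>)))"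
| ax_G_fix: "gtl (Imp (TG \<phi>) (And \<phi> (TX (TG \<phi>))))"
| ax_U_fix: "gtl (Imp (Or \<psi> (And \<phi> (TX (TU \<phi> \<psi>)))) (TU \<phi> \<psi>))"
| ax_G_ind: "gtl (Imp (TG (Imp \<phi> (TX \<phi>))) (Imp \<phi> (TG \<phi>)))"
| ax_U_ind: "gtl (Imp (TG (Imp (And \<psi> (TX \<phi>)) \<phi>)) (Imp (TU \<psi> \<phi>) \<phi>))"
| ax_Y_bot: "gtl (neg (TY bot))"
| ax_Y_or: "gtl (Imp (TY (Or \<phi> \<psi>)) (Or (TY \<phi>) (TY \<psi>)))"
| ax_Y_and: "gtl (Imp (And (TY \<phi>) (TY \<psi>)) (TY (And \<phi> \<psi>)))"
| ax_Y_imp: "gtl (iff (TY (Imp \<phi> \<psi>)) (Imp (TY \<phi>) (TY \<psi>)))"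
| ax_H_K: "gtl (Imp (TH (Imp \<phi> \<psi>)) (Imp (TH \<phi>) (TH \<psi>)))"
| ax_H_S2: "gtl (Imp (TH (Imp \<phi> \<psi>)) (Imp (TS \<theta> \<phi>) (TS \<theta> \<psi>)))"
| ax_H_S1: "gtl (Imp (TH (Imp \<phi> \<psi>)) (Imp (TS \<phi> \<theta>) (TS \<psi> \<theta>)))"
| ax_H_fix: "gtl (Imp (TH \<phi>) (And \<phi> (TY (TH \<phi>))))"
| ax_S_fix: "gtl (Imp (Or \<psi> (And \<phi> (TY (TS \<phi> \<psi>)))) (TS \<phi> \<psi>))"
| ax_H_ind: "gtl (Imp (TH (Imp \<phi> (TY \<phi>))) (Imp \<phi> (TH \<phi>)))"
| ax_S_ind: "gtl (Imp (TH (Imp (And \<psi> (TY \<phi>)) \<phi>)) (Imp (TS \<psi> \<phi>) \<phi>))"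
| ax_XY: "gtl (iff \<phi> (TX (TY \<phi>)))"
| ax_YX: "gtl (iff \<phi> (TY (TX \<phi>)))"
| rule_coimp_mono: "gtl (Imp \<phi> \<psi>) \<Longrightarrow> gtl (Imp (Coimp \<phi> \<theta>) (Coimp \<psi> \<theta>))"
| rule_coimp_res: "gtl (Imp \<phi> (Or \<psi> \<gamma>)) \<Longrightarrow> gtl (Imp (Coimp \<phi> \<psi>) \<gamma>)"
| mp: "gtl (Imp \<phi> \<psi>) \<Longrightarrow> gtl \<phi> \<Longrightarrow> gtl \<psi>"
| nec_X: "gtl \<phi> \<Longrightarrow> gtl (TX \<phi>)"
| nec_Y: "gtl \<phi> \<Longrightarrow> gtl (TY \<phi>)"
| nec_G: "gtl \<phi> \<Longrightarrow> gtl (TG \<phi>)"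
| nec_H: "gtl \<phi> \<Longrightarrow> gtl (TH \<phi>)"

fun conjs :: "fm list \<Rightarrow> fm" where
  "conjs [] = top"
| "conjs (x # xs) = And x (conjs xs)"

fun disjs :: "fm list \<Rightarrow> fm" where
  "disjs [] = bot"
| "disjs (x # xs) = Or x (disjs xs)"

definition derives :: "fm set \<Rightarrow> fm set \<Rightarrow> bool" where
  "derives \<Gamma> \<Delta> \<longleftrightarrow> (\<exists>gs ds. set gs \<subseteq> \<Gamma> \<and> set ds \<subseteq> \<Delta> \<and> gtl (Imp (conjs gs) (disjs ds)))"

definition is_type :: "fm set \<Rightarrow> fm set \<Rightarrow> bool" where
  "is_type \<Sigma> \<Phi> \<longleftrightarrow> \<Phi> \<subseteq> \<Sigma> \<and>
     (\<forall>\<phi> \<psi>. And \<phi> \<psi> \<in> \<Sigma> \<longrightarrow> (And \<phi> \<psi> \<in> \<Phi> \<longleftrightarrow> \<phi> \<in> \<Phi> \<and> \<psi> \<in> \<Phi>)) \<and>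
     (\<forall>\<phi> \<psi>. Or \<phi> \<psi> \<in> \<Sigma> \<longrightarrow> (Or \<phi> \<psi> \<in> \<Phi> \<longleftrightarrow> \<phi> \<in> \<Phi> \<or> \<psi> \<in> \<Phi>)) \<and>
     (\<forall>\<phi> \<psi>. Imp \<phi> \<psi> \<in> \<Sigma> \<longrightarrow>
        (Imp \<phi> \<psi> \<in> \<Phi> \<longrightarrow> \<phi> \<notin> \<Phi> \<or> \<psi> \<in> \<Phi>) \<and> (\<psi> \<in> \<Phi> \<longrightarrow> Imp \<phi> \<psi> \<in> \<Phi>)) \<and>
     (\<forall>\<phi> \<psi>. Coimp \<phi> \<psi> \<in> \<Sigma> \<longrightarrow>
        (Coimp \<phi> \<psi> \<in> \<Phi> \<longrightarrow> \<phi> \<in> \<Phi>) \<and> (\<phi> \<in> \<Phi> \<and> \<psi> \<notin> \<Phi> \<longrightarrow> Coimp \<phi> \<psi> \<in> \<Phi>))"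

definition comparable :: "('a \<Rightarrow> 'a \<Rightarrow> bool) \<Rightarrow> 'a \<Rightarrow> 'a \<Rightarrow> bool" where
  "comparable le x y \<longleftrightarrow> le x y \<or> le y x"

text \<open>(W,\<le>) is a disjoint union of linear posets: a partial order in which
  comparability is transitive (the components are linearly ordered).\<close>
definition union_of_linear_posets :: "'a set \<Rightarrow> ('a \<Rightarrow> 'a \<Rightarrow> bool) \<Rightarrow> bool" where
  "union_of_linear_posets W le \<longleftrightarrow>
     (\<forall>x y. le x y \<longrightarrow> x \<in> W \<and> y \<in> W) \<and>
     (\<forall>x\<in>W. le x x) \<and>
     (\<forall>x\<in>W. \<forall>y\<in>W. le x y \<and> le y x \<longrightarrow> x = y) \<and>
     (\<forall>x\<in>W. \<forall>y\<in>W. \<forall>z\<in>W. le x y \<and> le y z \<longrightarrow> le x z) \<and>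
     (\<forall>x\<in>W. \<forall>y\<in>W. \<forall>z\<in>W. comparable le x y \<and> comparable le y z \<longrightarrow> comparable le x z)"

definition labelled_space :: "fm set \<Rightarrow> 'a set \<Rightarrow> ('a \<Rightarrow> 'a \<Rightarrow> bool) \<Rightarrow> ('a \<Rightarrow> fm set) \<Rightarrow> bool" where
  "labelled_space \<Sigma> W le lab \<longleftrightarrow>
     union_of_linear_posets W le \<and>
     (\<forall>w\<in>W. is_type \<Sigma> (lab w)) \<and>
     (\<forall>w\<in>W. \<forall>v\<in>W. le w v \<longrightarrow> lab v \<subseteq> lab w) \<and>
     (\<forall>w\<in>W. \<forall>\<phi> \<psi>. Imp \<phi> \<psi> \<in> \<Sigma> - lab w \<longrightarrow>
        (\<exists>v\<in>W. le v w \<and> \<phi> \<in> lab v \<and> \<psi> \<notin> lab v)) \<and>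
     (\<forall>w\<in>W. \<forall>\<phi> \<psi>. Coimp \<phi> \<psi> \<in> lab w \<longrightarrow>
        (\<exists>v\<in>W. le w v \<and> \<phi> \<in> lab v \<and> \<psi> \<notin> lab v))"

definition convex_set :: "'a set \<Rightarrow> ('a \<Rightarrow> 'a \<Rightarrow> bool) \<Rightarrow> 'a set \<Rightarrow> bool" where
  "convex_set W le A \<longleftrightarrow> (\<forall>a\<in>A. \<forall>b\<in>W. \<forall>c\<in>A. le a b \<and> le b c \<longrightarrow> b \<in> A)"

definition convex_rel :: "'a set \<Rightarrow> ('a \<Rightarrow> 'a \<Rightarrow> bool) \<Rightarrow> ('a \<Rightarrow> 'a \<Rightarrow> bool) \<Rightarrow> bool" where
  "convex_rel W le R \<longleftrightarrow>
     (\<forall>x\<in>W. convex_set W le {y\<in>W. R x y} \<and> convex_set W le {y\<in>W. R y x})"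

definition fully_confluent :: "'a set \<Rightarrow> ('a \<Rightarrow> 'a \<Rightarrow> bool) \<Rightarrow> ('a \<Rightarrow> 'a \<Rightarrow> bool) \<Rightarrow> bool" where
  "fully_confluent W le R \<longleftrightarrow>
     (\<forall>x\<in>W. \<forall>x'\<in>W. \<forall>y'\<in>W. le x x' \<and> R x' y' \<longrightarrow> (\<exists>y\<in>W. R x y \<and> le y y')) \<and>
     (\<forall>x\<in>W. \<forall>x'\<in>W. \<forall>y\<in>W. le x x' \<and> R x y \<longrightarrow> (\<exists>y'\<in>W. R x' y' \<and> le y y')) \<and>
     (\<forall>x'\<in>W. \<forall>y'\<in>W. \<forall>y\<in>W. R x' y' \<and> le y y' \<longrightarrow> (\<exists>x\<in>W. le x x' \<and> R x y)) \<and>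
     (\<forall>x\<in>W. \<forall>y\<in>W. \<forall>y'\<in>W. R x y \<and> le y y' \<longrightarrow> (\<exists>x'\<in>W. le x x' \<and> R x' y'))"

definition bi_serial :: "'a set \<Rightarrow> ('a \<Rightarrow> 'a \<Rightarrow> bool) \<Rightarrow> bool" where
  "bi_serial W R \<longleftrightarrow> (\<forall>x\<in>W. (\<exists>y\<in>W. R x y) \<and> (\<exists>y\<in>W. R y x))"

definition sensible :: "fm set \<Rightarrow> 'a set \<Rightarrow> ('a \<Rightarrow> fm set) \<Rightarrow> ('a \<Rightarrow> 'a \<Rightarrow> bool) \<Rightarrow> bool" where
  "sensible \<Sigma> W lab R \<longleftrightarrow> (\<forall>w\<in>W. \<forall>v\<in>W. R w v \<longrightarrow>
     (\<forall>\<phi>. TX \<phi> \<in> \<Sigma> \<longrightarrow> (TX \<phi> \<in> lab w \<longleftrightarrow> \<phi> \<in> lab v)) \<and>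
     (\<forall>\<phi>. TY \<phi> \<in> \<Sigma> \<longrightarrow> (TY \<phi> \<in> lab v \<longleftrightarrow> \<phi> \<in> lab w)) \<and>
     (\<forall>\<phi>. TG \<phi> \<in> \<Sigma> \<longrightarrow> (TG \<phi> \<in> lab w \<longleftrightarrow> \<phi> \<in> lab w \<and> TG \<phi> \<in> lab v)) \<and>
     (\<forall>\<phi>. TH \<phi> \<in> \<Sigma> \<longrightarrow> (TH \<phi> \<in> lab v \<longleftrightarrow> \<phi> \<in> lab v \<and> TH \<phi> \<in> lab w)) \<and>
     (\<forall>\<phi> \<psi>. TU \<phi> \<psi> \<in> \<Sigma> \<longrightarrow>
        (TU \<phi> \<psi> \<in> lab w \<longleftrightarrow> \<psi> \<in> lab w \<or> (\<phi> \<in> lab w \<and> TU \<phi> \<psi> \<in> lab v))) \<and>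
     (\<forall>\<phi> \<psi>. TS \<phi> \<psi> \<in> \<Sigma> \<longrightarrow>
        (TS \<phi> \<psi> \<in> lab v \<longleftrightarrow> \<psi> \<in> lab v \<or> (\<phi> \<in> lab v \<and> TS \<phi> \<psi> \<in> lab w))))"

definition omega_sensible :: "fm set \<Rightarrow> 'a set \<Rightarrow> ('a \<Rightarrow> fm set) \<Rightarrow> ('a \<Rightarrow> 'a \<Rightarrow> bool) \<Rightarrow> bool" where
  "omega_sensible \<Sigma> W lab R \<longleftrightarrow> (\<forall>w\<in>W.
     (\<forall>\<phi>. TG \<phi> \<in> \<Sigma> - lab w \<longrightarrow> (\<exists>v\<in>W. \<exists>n. (R ^^ n) w v \<and> \<phi> \<notin> lab v)) \<and>
     (\<forall>\<phi>. TH \<phi> \<in> \<Sigma> - lab w \<longrightarrow> (\<exists>v\<in>W. \<exists>n. (R ^^ n) v w \<and> \<phi> \<notin> lab v)) \<and>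
     (\<forall>\<phi> \<psi>. TU \<phi> \<psi> \<in> lab w \<longrightarrow> (\<exists>v\<in>W. \<exists>n. (R ^^ n) w v \<and> \<psi> \<in> lab v)) \<and>
     (\<forall>\<phi> \<psi>. TS \<phi> \<psi> \<in> lab w \<longrightarrow> (\<exists>v\<in>W. \<exists>n. (R ^^ n) v w \<and> \<psi> \<in> lab v)))"

definition labelled_system ::
  "fm set \<Rightarrow> 'a set \<Rightarrow> ('a \<Rightarrow> 'a \<Rightarrow> bool) \<Rightarrow> ('a \<Rightarrow> fm set) \<Rightarrow> ('a \<Rightarrow> 'a \<Rightarrow> bool) \<Rightarrow> bool" where
  "labelled_system \<Sigma> W le lab R \<longleftrightarrow>
     labelled_space \<Sigma> W le lab \<and>
     (\<forall>x y. R x y \<longrightarrow> x \<in> W \<and> y \<in> W) \<and>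
     convex_rel W le R \<and> fully_confluent W le R \<and> bi_serial W R \<and> sensible \<Sigma> W lab R"

definition quasimodel ::
  "fm set \<Rightarrow> 'a set \<Rightarrow> ('a \<Rightarrow> 'a \<Rightarrow> bool) \<Rightarrow> ('a \<Rightarrow> fm set) \<Rightarrow> ('a \<Rightarrow> 'a \<Rightarrow> bool) \<Rightarrow> bool" where
  "quasimodel \<Sigma> W le lab R \<longleftrightarrow> labelled_system \<Sigma> W le lab R \<and> omega_sensible \<Sigma> W lab R"

definition Type_inf :: "fm set set" where
  "Type_inf = {\<Phi>. is_type UNIV \<Phi> \<and> \<not> derives \<Phi> (UNIV - \<Phi>)}"

definition succ_type :: "fm set \<Rightarrow> fm set" where
  "succ_type \<Phi> = {\<phi>. TX \<phi> \<in> \<Phi>}"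

definition clab :: "fm set \<Rightarrow> fm set \<Rightarrow> fm set" where
  "clab \<Sigma> \<Phi> = \<Phi> \<inter> \<Sigma>"

text \<open>L(\<Phi>): labels of all types comparable with \<Phi> (\<Phi> \<le> \<Psi> iff \<Phi> \<supseteq> \<Psi>).\<close>
definition cL :: "fm set \<Rightarrow> fm set \<Rightarrow> fm set set" where
  "cL \<Sigma> \<Phi> = {clab \<Sigma> \<Psi> | \<Psi>. \<Psi> \<in> Type_inf \<and> (\<Psi> \<supseteq> \<Phi> \<or> \<Phi> \<supseteq> \<Psi>)}"

definition csim :: "fm set \<Rightarrow> fm set \<Rightarrow> fm set \<Rightarrow> bool" where
  "csim \<Sigma> \<Phi> \<Psi> \<longleftrightarrow> clab \<Sigma> \<Phi> = clab \<Sigma> \<Psi> \<and> cL \<Sigma> \<Phi> = cL \<Sigma> \<Psi>"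

definition cclass :: "fm set \<Rightarrow> fm set \<Rightarrow> fm set set" where
  "cclass \<Sigma> \<Phi> = {\<Psi> \<in> Type_inf. csim \<Sigma> \<Phi> \<Psi>}"

definition qW :: "fm set \<Rightarrow> fm set set set" where
  "qW \<Sigma> = cclass \<Sigma> ` Type_inf"

definition qle :: "fm set \<Rightarrow> fm set set \<Rightarrow> fm set set \<Rightarrow> bool" where
  "qle \<Sigma> A B \<longleftrightarrow> A \<in> qW \<Sigma> \<and> B \<in> qW \<Sigma> \<and>
     (\<exists>\<Phi>\<in>A. \<exists>\<Psi>\<in>B. cL \<Sigma> \<Phi> = cL \<Sigma> \<Psi> \<and> clab \<Sigma> \<Psi> \<subseteq> clab \<Sigma> \<Phi>)"

definition qlab :: "fm set \<Rightarrow> fm set set \<Rightarrow> fm set" where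
  "qlab \<Sigma> A = clab \<Sigma> (SOME \<Phi>. \<Phi> \<in> A)"

definition qR0 :: "fm set \<Rightarrow> fm set set \<Rightarrow> fm set set \<Rightarrow> bool" where
  "qR0 \<Sigma> A B \<longleftrightarrow> (\<exists>\<Phi>\<in>Type_inf. A = cclass \<Sigma> \<Phi> \<and> B = cclass \<Sigma> (succ_type \<Phi>))"

definition qRplus :: "fm set \<Rightarrow> fm set set \<Rightarrow> fm set set \<Rightarrow> bool" where
  "qRplus \<Sigma> A B \<longleftrightarrow> (\<exists>A1 A2 B1 B2.
     qle \<Sigma> A1 A \<and> qle \<Sigma> A A2 \<and> qle \<Sigma> B1 B \<and> qle \<Sigma> B B2 \<and>
     qR0 \<Sigma> A2 B1 \<and> qR0 \<Sigma> A1 B2)"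

end

theory Submission
  imports Defs
begin


inductive ih :: "ipf set \<Rightarrow> ipf \<Rightarrow> bool" for H where
  ih_hyp: "a \<in> H \<Longrightarrow> ih H a"
| ih_ax: "ipc a \<Longrightarrow> ih H a"
| ih_mp: "ih H (IImp a b) \<Longrightarrow> ih H a \<Longrightarrow> ih H b"

lemma ipc_I: "ipc (IImp a a)"
proof -
  have 1: "ipc (IImp (IImp a (IImp (IImp a a) a)) (IImp (IImp a (IImp a a)) (IImp a a)))" by (rule ipc_S)
  have 2: "ipc (IImp a (IImp (IImp a a) a))" by (rule ipc_K)
  have 3: "ipc (IImp a (IImp a a))" by (rule ipc_K)
  show ?thesis using ipc_mp[OF ipc_mp[OF 1 2] 3] .
qed

lemma ih_ded: "ih (insert a H) b \<Longrightarrow> ih H (IImp a b)"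
proof (induction rule: ih.induct)
  case (ih_hyp c)
  then show ?case
  proof
    assume "c = a" then show ?thesis using ipc_I ih_ax by blast
  next
    assume "c \<in> H" then show ?thesis using ih.intros ipc_K by (meson ih_mp)
  qed
next
  case (ih_ax c) then show ?case by (meson ih.intros ipc_K)
next
  case (ih_mp c d)
  then show ?case by (meson ih.intros ipc_S)
qed

lemma ih_ipc: "ih {} a \<Longrightarrow> ipc a"
  by (induction rule: ih.induct) (auto intro: ipc_mp)

lemma ih_gtl: "ih {} f \<Longrightarrow> gtl (isubst \<sigma> f)"
  using ih_ipc int_taut by blast

lemma ihH: "a \<in> H \<Longrightarrow> ih H a" by (rule ih_hyp)

abbreviation "P0 \<equiv> IVar 0" abbreviation "P1 \<equiv> IVar 1" abbreviation "P2 \<equiv> IVar 2"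

definition sg :: "fm \<Rightarrow> fm \<Rightarrow> fm \<Rightarrow> nat \<Rightarrow> fm" where
  "sg a b c n = (if n = 0 then a else if n = 1 then b else c)"

lemma sg_simps[simp]: "sg a b c 0 = a" "sg a b c (Suc 0) = b" "sg a b c 2 = c"
  by (auto simp: sg_def)


lemmas ihI = ih_hyp ih_mp ih_ax ipc.intros insertI1 insertI2


lemma taut_trans: "ipc (IImp (IImp P0 P1) (IImp (IImp P1 P2) (IImp P0 P2)))"
  apply (rule ih_ipc, (intro ih_ded)) by (meson ihI)
lemma taut_andI: "ipc (IImp (IImp P2 P0) (IImp (IImp P2 P1) (IImp P2 (IAnd P0 P1))))"
  apply (rule ih_ipc, (intro ih_ded))
  apply (rule ih_mp[of _ P1]) apply (rule ih_mp[of _ P0]) apply (rule ih_ax, rule ipc_and3)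
  apply (meson ihI) apply (meson ihI) done
lemma taut_curry: "ipc (IImp (IImp (IAnd P0 P1) P2) (IImp P0 (IImp P1 P2)))"
  apply (rule ih_ipc, (intro ih_ded))
  apply (rule ih_mp[of _ "IAnd P0 P1"]) apply (meson ihI)
  apply (rule ih_mp[of _ P1]) apply (rule ih_mp[of _ P0]) apply (rule ih_ax, rule ipc_and3)
  apply (meson ihI) apply (meson ihI) done
lemma taut_uncurry: "ipc (IImp (IImp P0 (IImp P1 P2)) (IImp (IAnd P0 P1) P2))"
  apply (rule ih_ipc, (intro ih_ded))
  apply (rule ih_mp[of _ P1]) apply (rule ih_mp[of _ P0]) apply (meson ihI)
  apply (rule ih_mp[of _ "IAnd P0 P1"]) apply (meson ihI) apply (meson ihI)
  apply (rule ih_mp[of _ "IAnd P0 P1"]) apply (meson ihI) apply (meson ihI) done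

lemma g_taut: "ipc f \<Longrightarrow> gtl (isubst \<sigma> f)" by (rule int_taut)

lemma g_trans: "gtl (Imp a b) \<Longrightarrow> gtl (Imp b c) \<Longrightarrow> gtl (Imp a c)"
  using g_taut[OF taut_trans, of "sg a b c"] by (simp) (meson mp)
lemma g_andI: "gtl (Imp c a) \<Longrightarrow> gtl (Imp c b) \<Longrightarrow> gtl (Imp c (And a b))"
  using g_taut[OF taut_andI, of "sg a b c"] by (simp) (meson mp)
lemma g_curry: "gtl (Imp (And a b) c) \<Longrightarrow> gtl (Imp a (Imp b c))"
  using g_taut[OF taut_curry, of "sg a b c"] by (simp) (meson mp)
lemma g_uncurry: "gtl (Imp a (Imp b c)) \<Longrightarrow> gtl (Imp (And a b) c)"
  using g_taut[OF taut_uncurry, of "sg a b c"] by (simp) (meson mp)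
lemma g_andE1: "gtl (Imp (And a b) a)"
  using g_taut[OF ipc_and1[of P0 P1], of "sg a b b"] by simp
lemma g_andE2: "gtl (Imp (And a b) b)"
  using g_taut[OF ipc_and2[of P0 P1], of "sg a b b"] by simp
lemma g_orI1: "gtl (Imp a (Or a b))"
  using g_taut[OF ipc_or1[of P0 P1], of "sg a b b"] by simp
lemma g_orI2: "gtl (Imp b (Or a b))"
  using g_taut[OF ipc_or2[of P1 P0], of "sg a b b"] by simp
lemma g_orE: "gtl (Imp a c) \<Longrightarrow> gtl (Imp b c) \<Longrightarrow> gtl (Imp (Or a b) c)"
  using g_taut[OF ipc_or3[of P0 P2 P1], of "sg a b c"] by (simp) (meson mp)
lemma g_K: "gtl (Imp a (Imp b a))"
  using g_taut[OF ipc_K[of P0 P1], of "sg a b b"] by simp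
lemma g_efq: "gtl (Imp bot a)"
  using g_taut[OF ipc_efq[of P0], of "sg a a a"] by simp
lemma g_refl: "gtl (Imp a a)"
  using g_taut[OF ipc_I[of P0], of "sg a a a"] by simp
lemma g_top: "gtl top"
  using g_refl unfolding top_def .
lemma g_weak: "gtl b \<Longrightarrow> gtl (Imp a b)"
  using g_K mp by blast
lemma g_to_top: "gtl (Imp a top)"
  using g_weak g_top by blast

lemma g_mpI: "gtl (Imp (And (Imp a b) a) b)"
  by (rule g_uncurry, rule g_refl)
lemma g_and_mono: "gtl (Imp a a') \<Longrightarrow> gtl (Imp b b') \<Longrightarrow> gtl (Imp (And a b) (And a' b'))"
  by (meson g_andE1 g_andE2 g_andI g_trans)
lemma g_or_mono: "gtl (Imp a a') \<Longrightarrow> gtl (Imp b b') \<Longrightarrow> gtl (Imp (Or a b) (Or a' b'))"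
  by (meson g_orI1 g_orI2 g_orE g_trans)
lemma g_and_comm: "gtl (Imp (And a b) (And b a))"
  by (meson g_andE1 g_andE2 g_andI)
lemma g_or_comm: "gtl (Imp (Or a b) (Or b a))"
  by (meson g_orI1 g_orI2 g_orE)
lemma g_dist: "gtl (Imp (And a (Or b c)) (Or (And a b) c))"
proof -
  have "gtl (Imp b (Imp a (Or (And a b) c)))"
    by (rule g_curry, rule g_trans[OF g_and_comm g_orI1])
  moreover have "gtl (Imp c (Imp a (Or (And a b) c)))"
    using g_trans[OF g_orI2 g_K] .
  ultimately have "gtl (Imp (Or b c) (Imp a (Or (And a b) c)))" by (rule g_orE)
  then have "gtl (Imp (And (Or b c) a) (Or (And a b) c))" by (rule g_uncurry)
  then show ?thesis using g_trans g_and_comm by blast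
qed




lemma conjs_elem: "x \<in> set xs \<Longrightarrow> gtl (Imp (conjs xs) x)"
  by (induction xs) (auto intro: g_andE1 g_trans[OF g_andE2 _])
lemma conjs_intro: "(\<And>x. x \<in> set xs \<Longrightarrow> gtl (Imp a x)) \<Longrightarrow> gtl (Imp a (conjs xs))"
  by (induction xs) (auto intro: g_andI g_to_top simp: top_def[symmetric])
lemma disjs_elem: "x \<in> set xs \<Longrightarrow> gtl (Imp x (disjs xs))"
  by (induction xs) (auto intro: g_orI1 g_trans[OF _ g_orI2])
lemma disjs_elim: "(\<And>x. x \<in> set xs \<Longrightarrow> gtl (Imp x b)) \<Longrightarrow> gtl (Imp (disjs xs) b)"
  by (induction xs) (auto intro: g_orE g_efq)
lemma conjs_sub: "set xs \<subseteq> set ys \<Longrightarrow> gtl (Imp (conjs ys) (conjs xs))"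
  by (meson conjs_elem conjs_intro subsetD)
lemma disjs_sub: "set xs \<subseteq> set ys \<Longrightarrow> gtl (Imp (disjs xs) (disjs ys))"
  by (meson disjs_elem disjs_elim subsetD)
lemma conjs_remove: "gtl (Imp (And t (conjs (removeAll t gs))) (conjs gs))"
  apply (rule conjs_intro)
  subgoal for x
    by (cases "x = t") (auto intro: g_andE1 g_trans[OF g_andE2 conjs_elem])
  done
lemma disjs_remove: "gtl (Imp (disjs ds) (Or t (disjs (removeAll t ds))))"
  apply (rule disjs_elim)
  subgoal for x
    by (cases "x = t") (auto intro: g_orI1 g_trans[OF disjs_elem g_orI2])
  done

lemma derives_cut:
  assumes "derives (insert t G) D" "derives G (insert t D)"
  shows "derives G D"
proof -
  obtain gs1 ds1 where 1: "set gs1 \<subseteq> insert t G" "set ds1 \<subseteq> D" "gtl (Imp (conjs gs1) (disjs ds1))"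
    using assms(1) unfolding derives_def by blast
  obtain gs2 ds2 where 2: "set gs2 \<subseteq> G" "set ds2 \<subseteq> insert t D" "gtl (Imp (conjs gs2) (disjs ds2))"
    using assms(2) unfolding derives_def by blast
  define r1 where "r1 = removeAll t gs1"
  define r2 where "r2 = removeAll t ds2"
  have a: "gtl (Imp (conjs (r1 @ gs2)) (And (conjs r1) (conjs gs2)))"
    by (rule g_andI; rule conjs_sub; auto)
  have b: "gtl (Imp (And (conjs r1) (conjs gs2)) (And (conjs r1) (Or t (disjs r2))))"
    unfolding r2_def by (rule g_and_mono[OF g_refl g_trans[OF 2(3) disjs_remove]])
  have c: "gtl (Imp (And (conjs r1) t) (disjs ds1))"
    using g_trans[OF g_and_comm g_trans[OF conjs_remove 1(3)]] unfolding r1_def .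
  have d: "gtl (Imp (Or (And (conjs r1) t) (disjs r2)) (disjs (ds1 @ r2)))"
    by (rule g_orE[OF g_trans[OF c disjs_sub] disjs_sub]) auto
  have "gtl (Imp (conjs (r1 @ gs2)) (disjs (ds1 @ r2)))"
    using g_trans[OF a g_trans[OF b g_trans[OF g_dist d]]] .
  moreover have "set (r1 @ gs2) \<subseteq> G" "set (ds1 @ r2) \<subseteq> D"
    using 1 2 by (auto simp: r1_def r2_def)
  ultimately show ?thesis unfolding derives_def by blast
qed

definition cons :: "fm set \<Rightarrow> bool" where
  "cons \<Phi> \<longleftrightarrow> \<not> derives \<Phi> (UNIV - \<Phi>)"

lemma cons_Cl: "cons \<Phi> \<Longrightarrow> set gs \<subseteq> \<Phi> \<Longrightarrow> gtl (Imp (conjs gs) (disjs ds)) \<Longrightarrow> \<exists>d\<in>set ds. d \<in> \<Phi>"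
  unfolding cons_def derives_def by blast

lemma cons_mp: "cons \<Phi> \<Longrightarrow> set gs \<subseteq> \<Phi> \<Longrightarrow> gtl (Imp (conjs gs) b) \<Longrightarrow> b \<in> \<Phi>"
  using cons_Cl[of \<Phi> gs "[b]"] g_trans[OF _ disjs_elem[of b "[b]"]] by auto

lemma cons_mp1: "cons \<Phi> \<Longrightarrow> a \<in> \<Phi> \<Longrightarrow> gtl (Imp a b) \<Longrightarrow> b \<in> \<Phi>"
  using cons_mp[of \<Phi> "[a]" b] g_trans[OF g_andE1] by auto

lemma cons_mp2: "cons \<Phi> \<Longrightarrow> a \<in> \<Phi> \<Longrightarrow> b \<in> \<Phi> \<Longrightarrow> gtl (Imp (And a b) c) \<Longrightarrow> c \<in> \<Phi>"
  using cons_mp[of \<Phi> "[a,b]" c] g_trans[OF g_and_mono[OF g_refl g_andE1]] by auto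

lemma cons_thm: "cons \<Phi> \<Longrightarrow> gtl b \<Longrightarrow> b \<in> \<Phi>"
  using cons_mp[of \<Phi> "[]" b] g_weak by auto

lemma cons_bot: "cons \<Phi> \<Longrightarrow> bot \<notin> \<Phi>"
  using cons_Cl[of \<Phi> "[bot]" "[]"] g_andE1 by auto

lemma cons_top: "cons \<Phi> \<Longrightarrow> top \<in> \<Phi>"
  using cons_thm g_top by blast

lemma cons_disjs: "cons \<Phi> \<Longrightarrow> disjs ds \<in> \<Phi> \<Longrightarrow> \<exists>d\<in>set ds. d \<in> \<Phi>"
  using cons_Cl[of \<Phi> "[disjs ds]" ds] g_andE1 by auto

lemma cons_disjs_iff: "cons \<Phi> \<Longrightarrow> disjs ds \<in> \<Phi> \<longleftrightarrow> (\<exists>d\<in>set ds. d \<in> \<Phi>)"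
  using cons_disjs cons_mp1 disjs_elem by blast

lemma cons_Or: "cons \<Phi> \<Longrightarrow> Or a b \<in> \<Phi> \<longleftrightarrow> a \<in> \<Phi> \<or> b \<in> \<Phi>"
proof -
  assume c: "cons \<Phi>"
  have "disjs [a,b] \<in> \<Phi>" if "Or a b \<in> \<Phi>"
    using cons_mp1[OF c that g_or_mono[OF g_refl g_orI1]] by simp
  then show ?thesis using cons_disjs[OF c, of "[a,b]"] cons_mp1[OF c _ g_orI1] cons_mp1[OF c _ g_orI2] by auto
qed

lemma cons_And: "cons \<Phi> \<Longrightarrow> And a b \<in> \<Phi> \<longleftrightarrow> a \<in> \<Phi> \<and> b \<in> \<Phi>"
  using cons_mp1 cons_mp2 g_andE1 g_andE2 g_refl by blast

lemma conjs_mem: "cons \<Phi> \<Longrightarrow> conjs xs \<in> \<Phi> \<longleftrightarrow> set xs \<subseteq> \<Phi>"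
  by (induction xs) (auto simp: cons_And cons_top)

lemma cons_Imp: "cons \<Phi> \<Longrightarrow> Imp a b \<in> \<Phi> \<Longrightarrow> a \<in> \<Phi> \<Longrightarrow> b \<in> \<Phi>"
  using cons_mp2 g_mpI by blast
lemma cons_Imp2: "cons \<Phi> \<Longrightarrow> b \<in> \<Phi> \<Longrightarrow> Imp a b \<in> \<Phi>"
  using cons_mp1 g_K by blast

lemma g_coimpE: "gtl (Imp (Coimp a b) a)"
  by (rule rule_coimp_res, rule g_orI2)

lemma cons_Coimp1: "cons \<Phi> \<Longrightarrow> Coimp a b \<in> \<Phi> \<Longrightarrow> a \<in> \<Phi>"
  using cons_mp1 g_coimpE by blast
lemma cons_Coimp2: "cons \<Phi> \<Longrightarrow> a \<in> \<Phi> \<Longrightarrow> b \<notin> \<Phi> \<Longrightarrow> Coimp a b \<in> \<Phi>"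
  using cons_mp1[OF _ _ ax_coimp] cons_Or by blast

lemma cons_type: "cons \<Phi> \<Longrightarrow> is_type UNIV \<Phi>"
  unfolding is_type_def
  apply (intro conjI allI impI)
  by (simp_all add: cons_And cons_Or) (meson cons_Imp cons_Imp2 cons_Coimp1 cons_Coimp2)+

lemma Type_inf_eq: "Type_inf = {\<Phi>. cons \<Phi>}"
  unfolding Type_inf_def cons_def using cons_type cons_def by blast




lemma derives_mono: "derives G D \<Longrightarrow> G \<subseteq> G' \<Longrightarrow> D \<subseteq> D' \<Longrightarrow> derives G' D'"
  unfolding derives_def by blast

lemma derives_refl: "t \<in> G \<Longrightarrow> t \<in> D \<Longrightarrow> derives G D"
  unfolding derives_def
  apply (rule exI[of _ "[t]"], rule exI[of _ "[t]"])
  using g_trans[OF g_andE1 g_orI1] by auto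

lemma lindenbaum:
  assumes nd: "\<not> derives \<Gamma> \<Delta>"
  shows "\<exists>\<Phi>. cons \<Phi> \<and> \<Gamma> \<subseteq> \<Phi> \<and> \<Delta> \<inter> \<Phi> = {}"
proof -
  define gm where "gm Z = \<Gamma> \<union> {\<phi>. (True,\<phi>) \<in> Z}" for Z
  define dl where "dl Z = \<Delta> \<union> {\<phi>. (False,\<phi>) \<in> Z}" for Z
  define A where "A = {Z. \<not> derives (gm Z) (dl Z)}"
  have "\<forall>C\<in>chains A. \<Union>C \<in> A"
  proof
    fix C assume C: "C \<in> chains A"
    show "\<Union>C \<in> A"
    proof (rule ccontr)
      assume "\<Union>C \<notin> A"
      then obtain gs ds where gd: "set gs \<subseteq> gm (\<Union>C)" "set ds \<subseteq> dl (\<Union>C)" "gtl (Imp (conjs gs) (disjs ds))"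
        unfolding A_def derives_def by blast
      define F where "F = (\<lambda>g. (True,g)) ` (set gs - \<Gamma>) \<union> (\<lambda>d. (False,d)) ` (set ds - \<Delta>)"
      have fF: "finite F" unfolding F_def by simp
      have FC: "F \<subseteq> \<Union>C" using gd(1,2) unfolding F_def gm_def dl_def by auto
      show False
      proof (cases "C = {}")
        case True
        then have "set gs \<subseteq> \<Gamma>" "set ds \<subseteq> \<Delta>" using gd(1,2) unfolding gm_def dl_def by auto
        then show False using nd gd(3) unfolding derives_def by blast
      next
        case False
        have "subset.chain A C" using C chains_alt_def by blast
        then obtain Z where Z: "Z \<in> C" "F \<subseteq> Z"
          using finite_subset_Union_chain[OF fF FC False] by blast
        have "set gs \<subseteq> gm Z" "set ds \<subseteq> dl Z" using Z(2) gd(1,2) unfolding F_def gm_def dl_def by auto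
        then have "derives (gm Z) (dl Z)" using gd(3) unfolding derives_def by blast
        moreover have "Z \<in> A" using Z(1) C unfolding chains_def by blast
        ultimately show False unfolding A_def by blast
      qed
    qed
  qed
  then obtain M where M: "M \<in> A" "\<And>X. X \<in> A \<Longrightarrow> M \<subseteq> X \<Longrightarrow> X = M"
    using Zorn_Lemma[of A] by blast
  define G where "G = gm M"
  have ndM: "\<not> derives G (dl M)" using M(1) unfolding A_def G_def by blast
  have all: "t \<in> G \<or> t \<in> dl M" for t
  proof (rule ccontr)
    assume nt: "\<not> (t \<in> G \<or> t \<in> dl M)"
    have "insert (True,t) M \<notin> A"
    proof
      assume "insert (True,t) M \<in> A"
      then have "insert (True,t) M = M" using M(2) by blast
      then show False using nt unfolding G_def gm_def by auto
    qed
    moreover have "gm (insert (True,t) M) = insert t G" "dl (insert (True,t) M) = dl M"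
      unfolding G_def gm_def dl_def by auto
    ultimately have 1: "derives (insert t G) (dl M)"
      unfolding A_def by simp
    have "insert (False,t) M \<notin> A"
    proof
      assume "insert (False,t) M \<in> A"
      then have "insert (False,t) M = M" using M(2) by blast
      then show False using nt unfolding dl_def by auto
    qed
    moreover have "gm (insert (False,t) M) = G" "dl (insert (False,t) M) = insert t (dl M)"
      unfolding G_def gm_def dl_def by auto
    ultimately have 2: "derives G (insert t (dl M))"
      unfolding A_def by simp
    show False using derives_cut[OF 1 2] ndM by blast
  qed
  have disj: "G \<inter> dl M = {}" using ndM derives_refl by blast
  have "cons G" unfolding cons_def
  proof
    assume "derives G (UNIV - G)"
    then have "derives G (dl M)" by (rule derives_mono) (use all in auto)
    then show False using ndM by blast
  qed
  moreover have "\<Gamma> \<subseteq> G" unfolding G_def gm_def by blast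
  moreover have "\<Delta> \<inter> G = {}" using disj unfolding dl_def by blast
  ultimately show ?thesis by blast
qed

lemma derives_single: "derives {a} {b} \<Longrightarrow> gtl (Imp a b)"
proof -
  assume "derives {a} {b}"
  then obtain gs ds where "set gs \<subseteq> {a}" "set ds \<subseteq> {b}" "gtl (Imp (conjs gs) (disjs ds))"
    unfolding derives_def by blast
  then show ?thesis
    using g_trans[OF g_trans[OF conjs_intro[of gs a]] disjs_elim[of ds b]] g_refl by blast
qed

lemma by_types: "(\<And>\<Phi>. cons \<Phi> \<Longrightarrow> a \<in> \<Phi> \<Longrightarrow> b \<in> \<Phi>) \<Longrightarrow> gtl (Imp a b)"
proof (rule ccontr)
  assume h: "\<And>\<Phi>. cons \<Phi> \<Longrightarrow> a \<in> \<Phi> \<Longrightarrow> b \<in> \<Phi>" and n: "\<not> gtl (Imp a b)"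
  then have "\<not> derives {a} {b}" using derives_single by blast
  then obtain \<Phi> where "cons \<Phi>" "a \<in> \<Phi>" "b \<notin> \<Phi>" using lindenbaum by blast
  then show False using h by blast
qed




definition pred_type :: "fm set \<Rightarrow> fm set" where
  "pred_type \<Phi> = {\<phi>. TY \<phi> \<in> \<Phi>}"

lemma g_iffD1: "gtl (iff a b) \<Longrightarrow> gtl (Imp a b)"
  unfolding iff_def using mp g_andE1 by blast
lemma g_iffD2: "gtl (iff a b) \<Longrightarrow> gtl (Imp b a)"
  unfolding iff_def using mp g_andE2 by blast

lemma X_mono: "gtl (Imp a b) \<Longrightarrow> gtl (Imp (TX a) (TX b))"
  using mp[OF g_iffD1[OF ax_X_imp] nec_X] by blast
lemma X_conjs: "gtl (Imp (conjs (map TX gs)) (TX (conjs gs)))"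
proof (induction gs)
  case Nil
  then show ?case using g_weak[OF nec_X[OF g_top]] by (simp add: top_def)
next
  case (Cons g gs)
  then show ?case using g_trans[OF g_and_mono[OF g_refl Cons] ax_X_and] by simp
qed
lemma X_disjs: "gtl (Imp (TX (disjs ds)) (disjs (map TX ds)))"
proof (induction ds)
  case Nil
  then show ?case using ax_X_bot by (simp add: neg_def)
next
  case (Cons d ds)
  then show ?case using g_trans[OF ax_X_or g_or_mono[OF g_refl Cons]] by simp
qed
lemma cons_succ_type: "cons \<Phi> \<Longrightarrow> cons (succ_type \<Phi>)"
proof -
  assume c: "cons \<Phi>"
  show "cons (succ_type \<Phi>)" unfolding cons_def
  proof
    assume "derives (succ_type \<Phi>) (UNIV - succ_type \<Phi>)"
    then obtain gs ds where gd: "set gs \<subseteq> succ_type \<Phi>" "set ds \<subseteq> UNIV - succ_type \<Phi>"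
      "gtl (Imp (conjs gs) (disjs ds))" unfolding derives_def by blast
    have "gtl (Imp (conjs (map TX gs)) (disjs (map TX ds)))"
      using g_trans[OF X_conjs g_trans[OF X_mono[OF gd(3)] X_disjs]] .
    moreover have "set (map TX gs) \<subseteq> \<Phi>" using gd(1) by (auto simp: succ_type_def)
    ultimately obtain d where "d \<in> set (map TX ds)" "d \<in> \<Phi>" using cons_Cl[OF c] by blast
    then show False using gd(2) by (auto simp: succ_type_def)
  qed
qed
lemma X_top: "gtl (TX top)" by (rule nec_X, rule g_top)

lemma G_fix1: "gtl (Imp (TG a) a)"
  using g_trans[OF ax_G_fix g_andE1] .
lemma G_fix2: "gtl (Imp (TG a) (TX (TG a)))"
  using g_trans[OF ax_G_fix g_andE2] .
lemma G_mono: "gtl (Imp a b) \<Longrightarrow> gtl (Imp (TG a) (TG b))"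
  using mp[OF ax_G_K nec_G] by blast
lemma G_indR: "gtl (Imp c (TX c)) \<Longrightarrow> gtl (Imp c (TG c))"
  using mp[OF ax_G_ind nec_G] by blast
lemma U_monoR: "gtl (Imp b c) \<Longrightarrow> gtl (Imp (TU a b) (TU a c))"
  using mp[OF ax_G_U2 nec_G] by blast
lemma U_indR: "gtl (Imp (And a (TX c)) c) \<Longrightarrow> gtl (Imp (TU a c) c)"
  using mp[OF ax_U_ind nec_G] by blast
lemma U_fold1: "gtl (Imp b (TU a b))"
  using g_trans[OF g_orI1 ax_U_fix] .
lemma U_fold2: "gtl (Imp (And a (TX (TU a b))) (TU a b))"
  using g_trans[OF g_orI2 ax_U_fix] .
lemma G_unfold: "gtl (Imp (And a (TX (TG a))) (TG a))"
proof -
  let ?c = "And a (TX (TG a))"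
  have "gtl (Imp (TG a) ?c)" by (rule g_andI[OF G_fix1 G_fix2])
  then have "gtl (Imp ?c (TX ?c))" using g_trans[OF g_andE2 X_mono] by blast
  then have "gtl (Imp ?c (TG ?c))" by (rule G_indR)
  then show ?thesis using g_trans[OF _ G_mono[OF g_andE1]] by blast
qed
lemma U_unfold: "gtl (Imp (TU a b) (Or b (And a (TX (TU a b)))))"
proof -
  let ?t = "Or b (And a (TX (TU a b)))"
  have 1: "gtl (Imp ?t (TU a b))" by (rule g_orE[OF U_fold1 U_fold2])
  have "gtl (Imp (And a (TX ?t)) ?t)"
    using g_trans[OF g_and_mono[OF g_refl X_mono[OF 1]] g_orI2] .
  then have "gtl (Imp (TU a ?t) ?t)" by (rule U_indR)
  then show ?thesis using g_trans[OF U_monoR[OF g_orI1]] by blast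
qed

lemma Y_mono: "gtl (Imp a b) \<Longrightarrow> gtl (Imp (TY a) (TY b))"
  using mp[OF g_iffD1[OF ax_Y_imp] nec_Y] by blast
lemma Y_conjs: "gtl (Imp (conjs (map TY gs)) (TY (conjs gs)))"
proof (induction gs)
  case Nil
  then show ?case using g_weak[OF nec_Y[OF g_top]] by (simp add: top_def)
next
  case (Cons g gs)
  then show ?case using g_trans[OF g_and_mono[OF g_refl Cons] ax_Y_and] by simp
qed
lemma Y_disjs: "gtl (Imp (TY (disjs ds)) (disjs (map TY ds)))"
proof (induction ds)
  case Nil
  then show ?case using ax_Y_bot by (simp add: neg_def)
next
  case (Cons d ds)
  then show ?case using g_trans[OF ax_Y_or g_or_mono[OF g_refl Cons]] by simp
qed
lemma cons_pred_type: "cons \<Phi> \<Longrightarrow> cons (pred_type \<Phi>)"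
proof -
  assume c: "cons \<Phi>"
  show "cons (pred_type \<Phi>)" unfolding cons_def
  proof
    assume "derives (pred_type \<Phi>) (UNIV - pred_type \<Phi>)"
    then obtain gs ds where gd: "set gs \<subseteq> pred_type \<Phi>" "set ds \<subseteq> UNIV - pred_type \<Phi>"
      "gtl (Imp (conjs gs) (disjs ds))" unfolding derives_def by blast
    have "gtl (Imp (conjs (map TY gs)) (disjs (map TY ds)))"
      using g_trans[OF Y_conjs g_trans[OF Y_mono[OF gd(3)] Y_disjs]] .
    moreover have "set (map TY gs) \<subseteq> \<Phi>" using gd(1) by (auto simp: pred_type_def)
    ultimately obtain d where "d \<in> set (map TY ds)" "d \<in> \<Phi>" using cons_Cl[OF c] by blast
    then show False using gd(2) by (auto simp: pred_type_def)
  qed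
qed
lemma Y_top: "gtl (TY top)" by (rule nec_Y, rule g_top)

lemma H_fix1: "gtl (Imp (TH a) a)"
  using g_trans[OF ax_H_fix g_andE1] .
lemma H_fix2: "gtl (Imp (TH a) (TY (TH a)))"
  using g_trans[OF ax_H_fix g_andE2] .
lemma H_mono: "gtl (Imp a b) \<Longrightarrow> gtl (Imp (TH a) (TH b))"
  using mp[OF ax_H_K nec_H] by blast
lemma H_indR: "gtl (Imp c (TY c)) \<Longrightarrow> gtl (Imp c (TH c))"
  using mp[OF ax_H_ind nec_H] by blast
lemma S_monoR: "gtl (Imp b c) \<Longrightarrow> gtl (Imp (TS a b) (TS a c))"
  using mp[OF ax_H_S2 nec_H] by blast
lemma S_indR: "gtl (Imp (And a (TY c)) c) \<Longrightarrow> gtl (Imp (TS a c) c)"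
  using mp[OF ax_S_ind nec_H] by blast
lemma S_fold1: "gtl (Imp b (TS a b))"
  using g_trans[OF g_orI1 ax_S_fix] .
lemma S_fold2: "gtl (Imp (And a (TY (TS a b))) (TS a b))"
  using g_trans[OF g_orI2 ax_S_fix] .
lemma H_unfold: "gtl (Imp (And a (TY (TH a))) (TH a))"
proof -
  let ?c = "And a (TY (TH a))"
  have "gtl (Imp (TH a) ?c)" by (rule g_andI[OF H_fix1 H_fix2])
  then have "gtl (Imp ?c (TY ?c))" using g_trans[OF g_andE2 Y_mono] by blast
  then have "gtl (Imp ?c (TH ?c))" by (rule H_indR)
  then show ?thesis using g_trans[OF _ H_mono[OF g_andE1]] by blast
qed
lemma S_unfold: "gtl (Imp (TS a b) (Or b (And a (TY (TS a b)))))"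
proof -
  let ?t = "Or b (And a (TY (TS a b)))"
  have 1: "gtl (Imp ?t (TS a b))" by (rule g_orE[OF S_fold1 S_fold2])
  have "gtl (Imp (And a (TY ?t)) ?t)"
    using g_trans[OF g_and_mono[OF g_refl Y_mono[OF 1]] g_orI2] .
  then have "gtl (Imp (TS a ?t) ?t)" by (rule S_indR)
  then show ?thesis using g_trans[OF S_monoR[OF g_orI1]] by blast
qed

lemma succ_pred: "cons \<Phi> \<Longrightarrow> succ_type (pred_type \<Phi>) = \<Phi>"
  unfolding succ_type_def pred_type_def
  using cons_mp1 g_iffD1[OF ax_YX] g_iffD2[OF ax_YX] by blast
lemma pred_succ: "cons \<Phi> \<Longrightarrow> pred_type (succ_type \<Phi>) = \<Phi>"
  unfolding succ_type_def pred_type_def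
  using cons_mp1 g_iffD1[OF ax_XY] g_iffD2[OF ax_XY] by blast
lemma succ_mono: "\<Phi> \<subseteq> \<Psi> \<Longrightarrow> succ_type \<Phi> \<subseteq> succ_type \<Psi>"
  unfolding succ_type_def by blast
lemma pred_mono: "\<Phi> \<subseteq> \<Psi> \<Longrightarrow> pred_type \<Phi> \<subseteq> pred_type \<Psi>"
  unfolding pred_type_def by blast




lemma witness_up:
  assumes c: "cons \<Phi>" and n: "Imp a b \<notin> \<Phi>"
  shows "\<exists>\<Psi>. cons \<Psi> \<and> \<Phi> \<subseteq> \<Psi> \<and> a \<in> \<Psi> \<and> b \<notin> \<Psi>"
proof -
  have "\<not> derives (insert a \<Phi>) {b}"
  proof
    assume "derives (insert a \<Phi>) {b}"
    then obtain gs ds where gd: "set gs \<subseteq> insert a \<Phi>" "set ds \<subseteq> {b}" "gtl (Imp (conjs gs) (disjs ds))"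
      unfolding derives_def by blast
    have "gtl (Imp (disjs ds) b)" using gd(2) by (intro disjs_elim) (auto intro: g_refl)
    then have "gtl (Imp (And a (conjs (removeAll a gs))) b)"
      using g_trans[OF conjs_remove g_trans[OF gd(3)]] by blast
    then have "gtl (Imp (And (conjs (removeAll a gs)) a) b)" using g_trans[OF g_and_comm] by blast
    then have "gtl (Imp (conjs (removeAll a gs)) (Imp a b))" by (rule g_curry)
    moreover have "set (removeAll a gs) \<subseteq> \<Phi>" using gd(1) by auto
    ultimately show False using cons_mp[OF c] n by blast
  qed
  then obtain \<Psi> where "cons \<Psi>" "insert a \<Phi> \<subseteq> \<Psi>" "{b} \<inter> \<Psi> = {}"
    using lindenbaum[of "insert a \<Phi>" "{b}"] by blast
  then show ?thesis by blast
qed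

lemma witness_down:
  assumes c: "cons \<Phi>" and y: "Coimp a b \<in> \<Phi>"
  shows "\<exists>\<Psi>. cons \<Psi> \<and> \<Psi> \<subseteq> \<Phi> \<and> a \<in> \<Psi> \<and> b \<notin> \<Psi>"
proof -
  have "\<not> derives {a} (insert b (UNIV - \<Phi>))"
  proof
    assume "derives {a} (insert b (UNIV - \<Phi>))"
    then obtain gs ds where gd: "set gs \<subseteq> {a}" "set ds \<subseteq> insert b (UNIV - \<Phi>)"
      "gtl (Imp (conjs gs) (disjs ds))" unfolding derives_def by blast
    have "gtl (Imp a (conjs gs))" using gd(1) by (intro conjs_intro) (auto intro: g_refl)
    then have "gtl (Imp a (Or b (disjs (removeAll b ds))))"
      using g_trans[OF _ g_trans[OF gd(3) disjs_remove]] by blast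
    then have "gtl (Imp (Coimp a b) (disjs (removeAll b ds)))" by (rule rule_coimp_res)
    then have "disjs (removeAll b ds) \<in> \<Phi>" using cons_mp1[OF c y] by blast
    then obtain d where "d \<in> set (removeAll b ds)" "d \<in> \<Phi>" using cons_disjs[OF c] by blast
    then show False using gd(2) by auto
  qed
  then obtain \<Psi> where "cons \<Psi>" "a \<in> \<Psi>" "insert b (UNIV - \<Phi>) \<inter> \<Psi> = {}"
    using lindenbaum by blast
  then show ?thesis by blast
qed

lemma up_lin:
  assumes "cons \<Psi>" "\<Psi> \<subseteq> A" "\<Psi> \<subseteq> B" "cons A" "cons B"
  shows "A \<subseteq> B \<or> B \<subseteq> A"
proof (rule ccontr)
  assume "\<not> (A \<subseteq> B \<or> B \<subseteq> A)"
  then obtain x y where xy: "x \<in> A" "x \<notin> B" "y \<in> B" "y \<notin> A" by blast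
  have "Or (Imp x y) (Imp y x) \<in> \<Psi>" using cons_thm[OF assms(1) ax_lin] .
  then have "Imp x y \<in> \<Psi> \<or> Imp y x \<in> \<Psi>" using cons_Or[OF assms(1)] by blast
  then show False using xy assms cons_Imp by blast
qed

lemma down_lin:
  assumes "cons \<Psi>" "A \<subseteq> \<Psi>" "B \<subseteq> \<Psi>" "cons A" "cons B"
  shows "A \<subseteq> B \<or> B \<subseteq> A"
proof (rule ccontr)
  assume "\<not> (A \<subseteq> B \<or> B \<subseteq> A)"
  then obtain x y where xy: "x \<in> A" "x \<notin> B" "y \<in> B" "y \<notin> A" by blast
  have "Coimp x y \<in> \<Psi>" "Coimp y x \<in> \<Psi>" using cons_Coimp2 xy assms by blast+
  then have "And (Coimp x y) (Coimp y x) \<in> \<Psi>" using cons_And[OF assms(1)] by blast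
  moreover have "neg (And (Coimp x y) (Coimp y x)) \<in> \<Psi>" using cons_thm[OF assms(1) ax_coimp_neg] .
  ultimately have "bot \<in> \<Psi>" using cons_Imp[OF assms(1)] unfolding neg_def by blast
  then show False using cons_bot[OF assms(1)] by blast
qed

definition comp :: "fm set \<Rightarrow> fm set \<Rightarrow> bool" where
  "comp A B \<longleftrightarrow> A \<subseteq> B \<or> B \<subseteq> A"

lemma comp_trans: "cons A \<Longrightarrow> cons B \<Longrightarrow> cons C \<Longrightarrow> comp A B \<Longrightarrow> comp B C \<Longrightarrow> comp A C"
  unfolding comp_def
proof -
  assume c: "cons A" "cons B" "cons C" and h: "A \<subseteq> B \<or> B \<subseteq> A" "B \<subseteq> C \<or> C \<subseteq> B"
  show "A \<subseteq> C \<or> C \<subseteq> A"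
  proof (cases "A \<subseteq> B")
    case True
    show ?thesis
    proof (cases "B \<subseteq> C")
      case True then show ?thesis using \<open>A \<subseteq> B\<close> by blast
    next
      case False then have "C \<subseteq> B" using h by blast
      then show ?thesis using down_lin[OF c(2) True _ c(1) c(3)] by blast
    qed
  next
    case False then have "B \<subseteq> A" using h by blast
    show ?thesis
    proof (cases "B \<subseteq> C")
      case True then show ?thesis using up_lin[OF c(2) \<open>B \<subseteq> A\<close> _ c(1) c(3)] by blast
    next
      case False then have "C \<subseteq> B" using h by blast
      then show ?thesis using \<open>B \<subseteq> A\<close> by blast
    qed
  qed
qed

lemma comp_sym: "comp A B \<Longrightarrow> comp B A" unfolding comp_def by blast

lemma cL_alt: "cL \<Sigma> \<Phi> = {clab \<Sigma> \<Psi> | \<Psi>. cons \<Psi> \<and> comp \<Phi> \<Psi>}"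
  unfolding cL_def Type_inf_eq comp_def by blast

lemma cL_eq: "cons \<Phi> \<Longrightarrow> cons \<Psi> \<Longrightarrow> comp \<Phi> \<Psi> \<Longrightarrow> cL \<Sigma> \<Phi> = cL \<Sigma> \<Psi>"
  unfolding cL_alt using comp_trans comp_sym by blast

lemma clab_in_cL: "cons \<Phi> \<Longrightarrow> clab \<Sigma> \<Phi> \<in> cL \<Sigma> \<Phi>"
  unfolding cL_alt comp_def by blast

lemma cL_chain: "cons \<Phi> \<Longrightarrow> a \<in> cL \<Sigma> \<Phi> \<Longrightarrow> b \<in> cL \<Sigma> \<Phi> \<Longrightarrow> a \<subseteq> b \<or> b \<subseteq> a"
proof -
  assume "cons \<Phi>" "a \<in> cL \<Sigma> \<Phi>" "b \<in> cL \<Sigma> \<Phi>"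
  then obtain A B where "cons \<Phi>" "cons A" "comp \<Phi> A" "cons B" "comp \<Phi> B" "a = clab \<Sigma> A" "b = clab \<Sigma> B"
    unfolding cL_alt by blast
  then have "comp A B" using comp_trans comp_sym by blast
  then show "a \<subseteq> b \<or> b \<subseteq> a"
    unfolding comp_def using \<open>a = _\<close> \<open>b = _\<close> by (auto simp: clab_def)
qed

lemma cclass_self: "cons \<Phi> \<Longrightarrow> \<Phi> \<in> cclass \<Sigma> \<Phi>"
  unfolding cclass_def csim_def Type_inf_eq by simp

lemma cclass_eq: "cons \<Phi> \<Longrightarrow> cons \<Psi> \<Longrightarrow> cclass \<Sigma> \<Phi> = cclass \<Sigma> \<Psi> \<longleftrightarrow> clab \<Sigma> \<Phi> = clab \<Sigma> \<Psi> \<and> cL \<Sigma> \<Phi> = cL \<Sigma> \<Psi>"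
proof
  assume c: "cons \<Phi>" "cons \<Psi>" "cclass \<Sigma> \<Phi> = cclass \<Sigma> \<Psi>"
  then have "\<Psi> \<in> cclass \<Sigma> \<Phi>" using cclass_self by metis
  then show "clab \<Sigma> \<Phi> = clab \<Sigma> \<Psi> \<and> cL \<Sigma> \<Phi> = cL \<Sigma> \<Psi>" unfolding cclass_def csim_def by blast
next
  assume "clab \<Sigma> \<Phi> = clab \<Sigma> \<Psi> \<and> cL \<Sigma> \<Phi> = cL \<Sigma> \<Psi>"
  then show "cclass \<Sigma> \<Phi> = cclass \<Sigma> \<Psi>" unfolding cclass_def csim_def by auto
qed

lemma cclass_mem: "\<Psi> \<in> cclass \<Sigma> \<Phi> \<Longrightarrow> cons \<Psi> \<and> clab \<Sigma> \<Psi> = clab \<Sigma> \<Phi> \<and> cL \<Sigma> \<Psi> = cL \<Sigma> \<Phi>"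
  unfolding cclass_def csim_def Type_inf_eq by auto

lemma qW_iff: "A \<in> qW \<Sigma> \<longleftrightarrow> (\<exists>\<Phi>. cons \<Phi> \<and> A = cclass \<Sigma> \<Phi>)"
  unfolding qW_def Type_inf_eq by blast

lemma qW_E: "A \<in> qW \<Sigma> \<Longrightarrow> (\<And>\<Phi>. cons \<Phi> \<Longrightarrow> A = cclass \<Sigma> \<Phi> \<Longrightarrow> P) \<Longrightarrow> P"
  using qW_iff by blast

lemma qW_I: "cons \<Phi> \<Longrightarrow> cclass \<Sigma> \<Phi> \<in> qW \<Sigma>"
  using qW_iff by blast

lemma qlab_cls: "cons \<Phi> \<Longrightarrow> qlab \<Sigma> (cclass \<Sigma> \<Phi>) = clab \<Sigma> \<Phi>"
  unfolding qlab_def using someI[of "\<lambda>x. x \<in> cclass \<Sigma> \<Phi>", OF cclass_self] cclass_mem by blast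

lemma qle_cls: "cons \<Phi> \<Longrightarrow> cons \<Psi> \<Longrightarrow>
   qle \<Sigma> (cclass \<Sigma> \<Phi>) (cclass \<Sigma> \<Psi>) \<longleftrightarrow> cL \<Sigma> \<Phi> = cL \<Sigma> \<Psi> \<and> clab \<Sigma> \<Psi> \<subseteq> clab \<Sigma> \<Phi>"
  unfolding qle_def using qW_I cclass_mem cclass_self by metis

lemma qle_W: "qle \<Sigma> A B \<Longrightarrow> A \<in> qW \<Sigma> \<and> B \<in> qW \<Sigma>"
  unfolding qle_def by blast

lemma sub_qle: "cons \<Phi> \<Longrightarrow> cons \<Psi> \<Longrightarrow> \<Phi> \<subseteq> \<Psi> \<Longrightarrow> qle \<Sigma> (cclass \<Sigma> \<Psi>) (cclass \<Sigma> \<Phi>)"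
  using qle_cls cL_eq[of \<Phi> \<Psi>] unfolding comp_def clab_def by blast

lemma lift_up:
  assumes "cons \<Phi>" "cons \<Psi>" "qle \<Sigma> (cclass \<Sigma> \<Phi>) (cclass \<Sigma> \<Psi>)"
  shows "\<exists>\<Theta>. cons \<Theta> \<and> \<Psi> \<subseteq> \<Theta> \<and> cclass \<Sigma> \<Theta> = cclass \<Sigma> \<Phi>"
proof -
  have h: "cL \<Sigma> \<Phi> = cL \<Sigma> \<Psi>" "clab \<Sigma> \<Psi> \<subseteq> clab \<Sigma> \<Phi>" using assms qle_cls by blast+
  then have "clab \<Sigma> \<Phi> \<in> cL \<Sigma> \<Psi>" using clab_in_cL[OF assms(1), of \<Sigma>] by simp
  then obtain \<Theta> where t: "cons \<Theta>" "comp \<Psi> \<Theta>" "clab \<Sigma> \<Theta> = clab \<Sigma> \<Phi>" unfolding cL_alt by blast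
  show ?thesis
  proof (cases "\<Psi> \<subseteq> \<Theta>")
    case True
    then have "cL \<Sigma> \<Theta> = cL \<Sigma> \<Phi>" using cL_eq[OF assms(2) t(1) t(2)] h by simp
    then show ?thesis using t True cclass_eq[OF t(1) assms(1)] by blast
  next
    case False
    then have "\<Theta> \<subseteq> \<Psi>" using t(2) comp_def by blast
    then have "clab \<Sigma> \<Theta> \<subseteq> clab \<Sigma> \<Psi>" unfolding clab_def by blast
    then have "clab \<Sigma> \<Psi> = clab \<Sigma> \<Phi>" using h t by blast
    then show ?thesis using h assms cclass_eq by blast
  qed
qed

lemma lift_down:
  assumes "cons \<Phi>" "cons \<Psi>" "qle \<Sigma> (cclass \<Sigma> \<Phi>) (cclass \<Sigma> \<Psi>)"
  shows "\<exists>\<Theta>. cons \<Theta> \<and> \<Theta> \<subseteq> \<Phi> \<and> cclass \<Sigma> \<Theta> = cclass \<Sigma> \<Psi>"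
proof -
  have h: "cL \<Sigma> \<Phi> = cL \<Sigma> \<Psi>" "clab \<Sigma> \<Psi> \<subseteq> clab \<Sigma> \<Phi>" using assms qle_cls by blast+
  then have "clab \<Sigma> \<Psi> \<in> cL \<Sigma> \<Phi>" using clab_in_cL[OF assms(2), of \<Sigma>] by simp
  then obtain \<Theta> where t: "cons \<Theta>" "comp \<Phi> \<Theta>" "clab \<Sigma> \<Theta> = clab \<Sigma> \<Psi>" unfolding cL_alt by blast
  show ?thesis
  proof (cases "\<Theta> \<subseteq> \<Phi>")
    case True
    then have "cL \<Sigma> \<Theta> = cL \<Sigma> \<Psi>" using cL_eq[OF assms(1) t(1) t(2)] h by simp
    then show ?thesis using t True cclass_eq[OF t(1) assms(2)] by blast
  next
    case False
    then have "\<Phi> \<subseteq> \<Theta>" using t(2) comp_def by blast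
    then have "clab \<Sigma> \<Phi> \<subseteq> clab \<Sigma> \<Theta>" unfolding clab_def by blast
    then have "clab \<Sigma> \<Psi> = clab \<Sigma> \<Phi>" using h t by blast
    then show ?thesis using h assms cclass_eq by blast
  qed
qed




lemma qle_refl: "A \<in> qW \<Sigma> \<Longrightarrow> qle \<Sigma> A A"
  by (erule qW_E) (simp add: qle_cls)

lemma qle_trans: "qle \<Sigma> A B \<Longrightarrow> qle \<Sigma> B C \<Longrightarrow> qle \<Sigma> A C"
proof -
  assume h: "qle \<Sigma> A B" "qle \<Sigma> B C"
  then have "A \<in> qW \<Sigma>" "B \<in> qW \<Sigma>" "C \<in> qW \<Sigma>" using qle_W by blast+
  then obtain \<Phi> \<Psi> \<Theta> where c: "cons \<Phi>" "cons \<Psi>" "cons \<Theta>" "A = cclass \<Sigma> \<Phi>" "B = cclass \<Sigma> \<Psi>" "C = cclass \<Sigma> \<Theta>"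
    by (meson qW_E)
  then show ?thesis using h by (simp add: qle_cls) blast
qed

lemma qle_antisym: "qle \<Sigma> A B \<Longrightarrow> qle \<Sigma> B A \<Longrightarrow> A = B"
proof -
  assume h: "qle \<Sigma> A B" "qle \<Sigma> B A"
  then have "A \<in> qW \<Sigma>" "B \<in> qW \<Sigma>" using qle_W by blast+
  then obtain \<Phi> \<Psi> where c: "cons \<Phi>" "cons \<Psi>" "A = cclass \<Sigma> \<Phi>" "B = cclass \<Sigma> \<Psi>"
    by (meson qW_E)
  then show ?thesis using h by (simp add: qle_cls cclass_eq)
qed

lemma qle_comp_trans:
  assumes w: "x \<in> qW \<Sigma>" "y \<in> qW \<Sigma>" "z \<in> qW \<Sigma>"
    and h: "comparable (qle \<Sigma>) x y" "comparable (qle \<Sigma>) y z"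
  shows "comparable (qle \<Sigma>) x z"
proof -
  obtain \<Phi> \<Psi> \<Theta> where c: "cons \<Phi>" "cons \<Psi>" "cons \<Theta>" "x = cclass \<Sigma> \<Phi>" "y = cclass \<Sigma> \<Psi>" "z = cclass \<Sigma> \<Theta>"
    using w by (meson qW_E)
  have e: "cL \<Sigma> \<Phi> = cL \<Sigma> \<Psi>" "cL \<Sigma> \<Psi> = cL \<Sigma> \<Theta>"
    using h c unfolding comparable_def by (auto simp: qle_cls)
  have "clab \<Sigma> \<Phi> \<in> cL \<Sigma> \<Phi>" "clab \<Sigma> \<Theta> \<in> cL \<Sigma> \<Phi>" using clab_in_cL c e by auto
  then have "clab \<Sigma> \<Phi> \<subseteq> clab \<Sigma> \<Theta> \<or> clab \<Sigma> \<Theta> \<subseteq> clab \<Sigma> \<Phi>" using cL_chain c(1) by blast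
  moreover have "qle \<Sigma> x z \<longleftrightarrow> clab \<Sigma> \<Theta> \<subseteq> clab \<Sigma> \<Phi>" "qle \<Sigma> z x \<longleftrightarrow> clab \<Sigma> \<Phi> \<subseteq> clab \<Sigma> \<Theta>"
    using c e qle_cls by simp_all
  ultimately show "comparable (qle \<Sigma>) x z" unfolding comparable_def by blast
qed

lemma ulp: "union_of_linear_posets (qW \<Sigma>) (qle \<Sigma>)"
  unfolding union_of_linear_posets_def
  apply (intro conjI)
  subgoal using qle_W by blast
  subgoal using qle_refl by blast
  subgoal using qle_antisym by blast
  subgoal using qle_trans by blast
  subgoal using qle_comp_trans by blast
  done

lemma subfs_self: "a \<in> subfs a"
  by (cases a) auto

lemma sc_sub: "subformula_closed \<Sigma> \<Longrightarrow> x \<in> \<Sigma> \<Longrightarrow> y \<in> subfs x \<Longrightarrow> y \<in> \<Sigma>"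
  unfolding subformula_closed_def by blast

lemma sc_simps:
  assumes "subformula_closed \<Sigma>"
  shows "And a b \<in> \<Sigma> \<Longrightarrow> a \<in> \<Sigma> \<and> b \<in> \<Sigma>"
    "Or a b \<in> \<Sigma> \<Longrightarrow> a \<in> \<Sigma> \<and> b \<in> \<Sigma>"
    "Imp a b \<in> \<Sigma> \<Longrightarrow> a \<in> \<Sigma> \<and> b \<in> \<Sigma>"
    "Coimp a b \<in> \<Sigma> \<Longrightarrow> a \<in> \<Sigma> \<and> b \<in> \<Sigma>"
    "TU a b \<in> \<Sigma> \<Longrightarrow> a \<in> \<Sigma> \<and> b \<in> \<Sigma>"
    "TS a b \<in> \<Sigma> \<Longrightarrow> a \<in> \<Sigma> \<and> b \<in> \<Sigma>"
    "TX a \<in> \<Sigma> \<Longrightarrow> a \<in> \<Sigma>"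
    "TY a \<in> \<Sigma> \<Longrightarrow> a \<in> \<Sigma>"
    "TG a \<in> \<Sigma> \<Longrightarrow> a \<in> \<Sigma>"
    "TH a \<in> \<Sigma> \<Longrightarrow> a \<in> \<Sigma>"
  using sc_sub[OF assms] subfs_self by fastforce+

lemma is_type_clab: "subformula_closed \<Sigma> \<Longrightarrow> cons \<Phi> \<Longrightarrow> is_type \<Sigma> (clab \<Sigma> \<Phi>)"
  unfolding is_type_def clab_def
proof (intro conjI allI impI)
  assume sc: "subformula_closed \<Sigma>" and c: "cons \<Phi>"
  note s = sc_simps[OF sc]
  show "\<Phi> \<inter> \<Sigma> \<subseteq> \<Sigma>" by blast
  show "\<And>a b. And a b \<in> \<Sigma> \<Longrightarrow> (And a b \<in> \<Phi> \<inter> \<Sigma>) = (a \<in> \<Phi> \<inter> \<Sigma> \<and> b \<in> \<Phi> \<inter> \<Sigma>)"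
    using s(1) cons_And[OF c] by blast
  show "\<And>a b. Or a b \<in> \<Sigma> \<Longrightarrow> (Or a b \<in> \<Phi> \<inter> \<Sigma>) = (a \<in> \<Phi> \<inter> \<Sigma> \<or> b \<in> \<Phi> \<inter> \<Sigma>)"
    using s(2) cons_Or[OF c] by blast
  show "\<And>a b. Imp a b \<in> \<Sigma> \<Longrightarrow> Imp a b \<in> \<Phi> \<inter> \<Sigma> \<Longrightarrow> a \<notin> \<Phi> \<inter> \<Sigma> \<or> b \<in> \<Phi> \<inter> \<Sigma>"
    using s(3) cons_Imp[OF c] by blast
  show "\<And>a b. Imp a b \<in> \<Sigma> \<Longrightarrow> b \<in> \<Phi> \<inter> \<Sigma> \<Longrightarrow> Imp a b \<in> \<Phi> \<inter> \<Sigma>"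
    using cons_Imp2[OF c] by blast
  show "\<And>a b. Coimp a b \<in> \<Sigma> \<Longrightarrow> Coimp a b \<in> \<Phi> \<inter> \<Sigma> \<Longrightarrow> a \<in> \<Phi> \<inter> \<Sigma>"
    using s(4) cons_Coimp1[OF c] by blast
  show "\<And>a b. Coimp a b \<in> \<Sigma> \<Longrightarrow> a \<in> \<Phi> \<inter> \<Sigma> \<and> b \<notin> \<Phi> \<inter> \<Sigma> \<Longrightarrow> Coimp a b \<in> \<Phi> \<inter> \<Sigma>"
    using s(4) cons_Coimp2[OF c] by blast
qed

lemma lspace: "subformula_closed \<Sigma> \<Longrightarrow> labelled_space \<Sigma> (qW \<Sigma>) (qle \<Sigma>) (qlab \<Sigma>)"
  unfolding labelled_space_def
proof (intro conjI ballI allI impI)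
  assume sc: "subformula_closed \<Sigma>"
  show "union_of_linear_posets (qW \<Sigma>) (qle \<Sigma>)" by (rule ulp)
  show "\<And>w. w \<in> qW \<Sigma> \<Longrightarrow> is_type \<Sigma> (qlab \<Sigma> w)"
    using qW_E qlab_cls is_type_clab[OF sc] by metis
  show "\<And>w v. w \<in> qW \<Sigma> \<Longrightarrow> v \<in> qW \<Sigma> \<Longrightarrow> qle \<Sigma> w v \<Longrightarrow> qlab \<Sigma> v \<subseteq> qlab \<Sigma> w"
    using qW_E qlab_cls qle_cls by metis
  fix w a b assume w: "w \<in> qW \<Sigma>"
  then obtain \<Phi> where c: "cons \<Phi>" "w = cclass \<Sigma> \<Phi>" by (meson qW_E)
  {
    assume "Imp a b \<in> \<Sigma> - qlab \<Sigma> w"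
    then have i: "Imp a b \<in> \<Sigma>" "Imp a b \<notin> \<Phi>" using c qlab_cls unfolding clab_def by auto
    then obtain \<Psi> where p: "cons \<Psi>" "\<Phi> \<subseteq> \<Psi>" "a \<in> \<Psi>" "b \<notin> \<Psi>" using witness_up c by blast
    show "\<exists>v\<in>qW \<Sigma>. qle \<Sigma> v w \<and> a \<in> qlab \<Sigma> v \<and> b \<notin> qlab \<Sigma> v"
      apply (rule bexI[of _ "cclass \<Sigma> \<Psi>"])
      using p c sub_qle qlab_cls sc_simps(3)[OF sc i(1)] qW_I unfolding clab_def by auto
  }
  {
    assume "Coimp a b \<in> qlab \<Sigma> w"
    then have i: "Coimp a b \<in> \<Sigma>" "Coimp a b \<in> \<Phi>" using c qlab_cls unfolding clab_def by auto
    then obtain \<Psi> where p: "cons \<Psi>" "\<Psi> \<subseteq> \<Phi>" "a \<in> \<Psi>" "b \<notin> \<Psi>" using witness_down c by blast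
    show "\<exists>v\<in>qW \<Sigma>. qle \<Sigma> w v \<and> a \<in> qlab \<Sigma> v \<and> b \<notin> qlab \<Sigma> v"
      apply (rule bexI[of _ "cclass \<Sigma> \<Psi>"])
      using p c sub_qle qlab_cls sc_simps(4)[OF sc i(1)] qW_I unfolding clab_def by auto
  }
qed




lemma qR0_iff: "qR0 \<Sigma> A B \<longleftrightarrow> (\<exists>\<Phi>. cons \<Phi> \<and> A = cclass \<Sigma> \<Phi> \<and> B = cclass \<Sigma> (succ_type \<Phi>))"
  unfolding qR0_def Type_inf_eq by blast

lemma Rplus_E:
  assumes "qRplus \<Sigma> X Y"
  obtains \<Phi>1 \<Phi>2 where "cons \<Phi>1" "cons \<Phi>2" "qle \<Sigma> (cclass \<Sigma> \<Phi>1) X" "qle \<Sigma> X (cclass \<Sigma> \<Phi>2)"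
    "qle \<Sigma> (cclass \<Sigma> (succ_type \<Phi>2)) Y" "qle \<Sigma> Y (cclass \<Sigma> (succ_type \<Phi>1))"
  using assms unfolding qRplus_def qR0_iff by blast

lemma Rplus_I:
  assumes "cons \<Phi>1" "cons \<Phi>2" "qle \<Sigma> (cclass \<Sigma> \<Phi>1) X" "qle \<Sigma> X (cclass \<Sigma> \<Phi>2)"
    "qle \<Sigma> (cclass \<Sigma> (succ_type \<Phi>2)) Y" "qle \<Sigma> Y (cclass \<Sigma> (succ_type \<Phi>1))"
  shows "qRplus \<Sigma> X Y"
  unfolding qRplus_def qR0_iff using assms by blast

lemma Rplus_W: "qRplus \<Sigma> X Y \<Longrightarrow> X \<in> qW \<Sigma> \<and> Y \<in> qW \<Sigma>"
  by (erule Rplus_E) (meson qle_W)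

lemma R0_Rplus: "cons \<Phi> \<Longrightarrow> qRplus \<Sigma> (cclass \<Sigma> \<Phi>) (cclass \<Sigma> (succ_type \<Phi>))"
  by (rule Rplus_I[of \<Phi> \<Phi>]) (auto intro: qle_refl qW_I cons_succ_type)

lemma pred_R0_Rplus: "cons \<Phi> \<Longrightarrow> qRplus \<Sigma> (cclass \<Sigma> (pred_type \<Phi>)) (cclass \<Sigma> \<Phi>)"
  using R0_Rplus[OF cons_pred_type, of \<Phi> \<Sigma>] succ_pred by simp

lemma convex: "convex_rel (qW \<Sigma>) (qle \<Sigma>) (qRplus \<Sigma>)"
  unfolding convex_rel_def convex_set_def
proof (intro ballI conjI impI)
  fix x a b c
  assume a: "a \<in> {y \<in> qW \<Sigma>. qRplus \<Sigma> x y}" and b: "b \<in> qW \<Sigma>" and c: "c \<in> {y \<in> qW \<Sigma>. qRplus \<Sigma> x y}"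
    and o: "qle \<Sigma> a b \<and> qle \<Sigma> b c"
  from a obtain \<Phi>1 \<Phi>2 where 1: "cons \<Phi>1" "cons \<Phi>2" "qle \<Sigma> (cclass \<Sigma> \<Phi>1) x" "qle \<Sigma> x (cclass \<Sigma> \<Phi>2)"
    "qle \<Sigma> (cclass \<Sigma> (succ_type \<Phi>2)) a" "qle \<Sigma> a (cclass \<Sigma> (succ_type \<Phi>1))" by (blast elim: Rplus_E)
  from c obtain \<Psi>1 \<Psi>2 where 2: "cons \<Psi>1" "cons \<Psi>2" "qle \<Sigma> (cclass \<Sigma> \<Psi>1) x" "qle \<Sigma> x (cclass \<Sigma> \<Psi>2)"
    "qle \<Sigma> (cclass \<Sigma> (succ_type \<Psi>2)) c" "qle \<Sigma> c (cclass \<Sigma> (succ_type \<Psi>1))" by (blast elim: Rplus_E)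
  have "qRplus \<Sigma> x b"
    by (rule Rplus_I[of \<Psi>1 \<Phi>2]) (use 1 2 o qle_trans in blast)+
  then show "b \<in> {y \<in> qW \<Sigma>. qRplus \<Sigma> x y}" using b by blast
next
  fix x a b c
  assume a: "a \<in> {y \<in> qW \<Sigma>. qRplus \<Sigma> y x}" and b: "b \<in> qW \<Sigma>" and c: "c \<in> {y \<in> qW \<Sigma>. qRplus \<Sigma> y x}"
    and o: "qle \<Sigma> a b \<and> qle \<Sigma> b c"
  from a obtain \<Phi>1 \<Phi>2 where 1: "cons \<Phi>1" "cons \<Phi>2" "qle \<Sigma> (cclass \<Sigma> \<Phi>1) a" "qle \<Sigma> a (cclass \<Sigma> \<Phi>2)"
    "qle \<Sigma> (cclass \<Sigma> (succ_type \<Phi>2)) x" "qle \<Sigma> x (cclass \<Sigma> (succ_type \<Phi>1))" by (blast elim: Rplus_E)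
  from c obtain \<Psi>1 \<Psi>2 where 2: "cons \<Psi>1" "cons \<Psi>2" "qle \<Sigma> (cclass \<Sigma> \<Psi>1) c" "qle \<Sigma> c (cclass \<Sigma> \<Psi>2)"
    "qle \<Sigma> (cclass \<Sigma> (succ_type \<Psi>2)) x" "qle \<Sigma> x (cclass \<Sigma> (succ_type \<Psi>1))" by (blast elim: Rplus_E)
  have "qRplus \<Sigma> b x"
    by (rule Rplus_I[of \<Phi>1 \<Psi>2]) (use 1 2 o qle_trans in blast)+
  then show "b \<in> {y \<in> qW \<Sigma>. qRplus \<Sigma> y x}" using b by blast
qed

lemma confl:
  "fully_confluent (qW \<Sigma>) (qle \<Sigma>) (qRplus \<Sigma>)"
  unfolding fully_confluent_def
proof (intro conjI ballI impI)
  fix x x' y' assume xw: "x \<in> qW \<Sigma>" and h: "qle \<Sigma> x x' \<and> qRplus \<Sigma> x' y'"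
  then obtain \<Phi>1 \<Phi>2 where 1: "cons \<Phi>2" "qle \<Sigma> x' (cclass \<Sigma> \<Phi>2)"
    "qle \<Sigma> (cclass \<Sigma> (succ_type \<Phi>2)) y'" by (blast elim: Rplus_E)
  obtain \<Phi> where p: "cons \<Phi>" "x = cclass \<Sigma> \<Phi>" using xw by (meson qW_E)
  have "qle \<Sigma> (cclass \<Sigma> \<Phi>) (cclass \<Sigma> \<Phi>2)" using h 1 p qle_trans by blast
  then obtain \<Theta> where t: "cons \<Theta>" "\<Phi>2 \<subseteq> \<Theta>" "cclass \<Sigma> \<Theta> = x" using lift_up p 1 by metis
  have "qle \<Sigma> (cclass \<Sigma> (succ_type \<Theta>)) (cclass \<Sigma> (succ_type \<Phi>2))"
    using sub_qle[OF cons_succ_type[OF 1(1)] cons_succ_type[OF t(1)] succ_mono[OF t(2)]] .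
  then show "\<exists>y\<in>qW \<Sigma>. qRplus \<Sigma> x y \<and> qle \<Sigma> y y'"
    using R0_Rplus[OF t(1), of \<Sigma>] t(3) 1 qle_trans qW_I cons_succ_type[OF t(1)] by metis
next
  fix x x' y assume yw: "x' \<in> qW \<Sigma>" and h: "qle \<Sigma> x x' \<and> qRplus \<Sigma> x y"
  then obtain \<Phi>1 where 1: "cons \<Phi>1" "qle \<Sigma> (cclass \<Sigma> \<Phi>1) x"
    "qle \<Sigma> y (cclass \<Sigma> (succ_type \<Phi>1))" by (blast elim: Rplus_E)
  obtain \<Phi> where p: "cons \<Phi>" "x' = cclass \<Sigma> \<Phi>" using yw by (meson qW_E)
  have "qle \<Sigma> (cclass \<Sigma> \<Phi>1) (cclass \<Sigma> \<Phi>)" using h 1 p qle_trans by blast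
  then obtain \<Theta> where t: "cons \<Theta>" "\<Theta> \<subseteq> \<Phi>1" "cclass \<Sigma> \<Theta> = x'" using lift_down p 1 by metis
  have "qle \<Sigma> (cclass \<Sigma> (succ_type \<Phi>1)) (cclass \<Sigma> (succ_type \<Theta>))"
    using sub_qle[OF cons_succ_type[OF t(1)] cons_succ_type[OF 1(1)] succ_mono[OF t(2)]] .
  then show "\<exists>y'\<in>qW \<Sigma>. qRplus \<Sigma> x' y' \<and> qle \<Sigma> y y'"
    using R0_Rplus[OF t(1), of \<Sigma>] t(3) 1 qle_trans qW_I cons_succ_type[OF t(1)] by metis
next
  fix x' y' y assume yw: "y \<in> qW \<Sigma>" and h: "qRplus \<Sigma> x' y' \<and> qle \<Sigma> y y'"
  then obtain \<Phi>1 where 1: "cons \<Phi>1" "qle \<Sigma> (cclass \<Sigma> \<Phi>1) x'"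
    "qle \<Sigma> y' (cclass \<Sigma> (succ_type \<Phi>1))" by (blast elim: Rplus_E)
  obtain \<Psi> where p: "cons \<Psi>" "y = cclass \<Sigma> \<Psi>" using yw by (meson qW_E)
  have "qle \<Sigma> (cclass \<Sigma> \<Psi>) (cclass \<Sigma> (succ_type \<Phi>1))" using h 1 p qle_trans by blast
  then obtain \<Theta> where t: "cons \<Theta>" "succ_type \<Phi>1 \<subseteq> \<Theta>" "cclass \<Sigma> \<Theta> = y"
    using lift_up p cons_succ_type[OF 1(1)] by metis
  have "\<Phi>1 \<subseteq> pred_type \<Theta>" using pred_mono[OF t(2)] pred_succ[OF 1(1)] by simp
  then have "qle \<Sigma> (cclass \<Sigma> (pred_type \<Theta>)) (cclass \<Sigma> \<Phi>1)"
    using sub_qle[OF 1(1) cons_pred_type[OF t(1)]] by blast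
  then show "\<exists>x\<in>qW \<Sigma>. qle \<Sigma> x x' \<and> qRplus \<Sigma> x y"
    using pred_R0_Rplus[OF t(1), of \<Sigma>] t(3) 1 qle_trans qW_I cons_pred_type[OF t(1)] by metis
next
  fix x y y' assume yw: "y' \<in> qW \<Sigma>" and h: "qRplus \<Sigma> x y \<and> qle \<Sigma> y y'"
  then obtain \<Phi>2 where 1: "cons \<Phi>2" "qle \<Sigma> x (cclass \<Sigma> \<Phi>2)"
    "qle \<Sigma> (cclass \<Sigma> (succ_type \<Phi>2)) y" by (blast elim: Rplus_E)
  obtain \<Psi> where p: "cons \<Psi>" "y' = cclass \<Sigma> \<Psi>" using yw by (meson qW_E)
  have "qle \<Sigma> (cclass \<Sigma> (succ_type \<Phi>2)) (cclass \<Sigma> \<Psi>)" using h 1 p qle_trans by blast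
  then obtain \<Theta> where t: "cons \<Theta>" "\<Theta> \<subseteq> succ_type \<Phi>2" "cclass \<Sigma> \<Theta> = y'"
    using lift_down p cons_succ_type[OF 1(1)] by metis
  have "pred_type \<Theta> \<subseteq> \<Phi>2" using pred_mono[OF t(2)] pred_succ[OF 1(1)] by simp
  then have "qle \<Sigma> (cclass \<Sigma> \<Phi>2) (cclass \<Sigma> (pred_type \<Theta>))"
    using sub_qle[OF cons_pred_type[OF t(1)] 1(1)] by blast
  then show "\<exists>x'\<in>qW \<Sigma>. qle \<Sigma> x x' \<and> qRplus \<Sigma> x' y'"
    using pred_R0_Rplus[OF t(1), of \<Sigma>] t(3) 1 qle_trans qW_I cons_pred_type[OF t(1)] by metis
qed

lemma biserial: "bi_serial (qW \<Sigma>) (qRplus \<Sigma>)"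
  unfolding bi_serial_def
proof
  fix x assume "x \<in> qW \<Sigma>"
  then obtain \<Phi> where p: "cons \<Phi>" "x = cclass \<Sigma> \<Phi>" by (meson qW_E)
  show "(\<exists>y\<in>qW \<Sigma>. qRplus \<Sigma> x y) \<and> (\<exists>y\<in>qW \<Sigma>. qRplus \<Sigma> y x)"
    using R0_Rplus[OF p(1), of \<Sigma>] pred_R0_Rplus[OF p(1), of \<Sigma>] p(2) Rplus_W by blast
qed




lemma Rplus_thetas:
  assumes R: "qRplus \<Sigma> (cclass \<Sigma> \<Phi>) (cclass \<Sigma> \<Psi>)" and c: "cons \<Phi>" "cons \<Psi>"
  shows "\<exists>\<Phi>1 \<Phi>2 Ta Tb Tc Td. cons \<Phi>1 \<and> cons \<Phi>2 \<and> cons Ta \<and> cons Tb \<and> cons Tc \<and> cons Td \<and>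
     \<Phi>2 \<subseteq> Ta \<and> clab \<Sigma> Ta = clab \<Sigma> \<Phi> \<and> Tb \<subseteq> \<Phi>1 \<and> clab \<Sigma> Tb = clab \<Sigma> \<Phi> \<and>
     Tc \<subseteq> succ_type \<Phi>2 \<and> clab \<Sigma> Tc = clab \<Sigma> \<Psi> \<and> succ_type \<Phi>1 \<subseteq> Td \<and> clab \<Sigma> Td = clab \<Sigma> \<Psi>"
proof -
  obtain \<Phi>1 \<Phi>2 where 1: "cons \<Phi>1" "cons \<Phi>2" "qle \<Sigma> (cclass \<Sigma> \<Phi>1) (cclass \<Sigma> \<Phi>)" "qle \<Sigma> (cclass \<Sigma> \<Phi>) (cclass \<Sigma> \<Phi>2)"
    "qle \<Sigma> (cclass \<Sigma> (succ_type \<Phi>2)) (cclass \<Sigma> \<Psi>)" "qle \<Sigma> (cclass \<Sigma> \<Psi>) (cclass \<Sigma> (succ_type \<Phi>1))"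
    using R by (rule Rplus_E)
  have s: "cons (succ_type \<Phi>1)" "cons (succ_type \<Phi>2)" using 1 cons_succ_type by blast+
  obtain Tb where b: "cons Tb" "Tb \<subseteq> \<Phi>1" "cclass \<Sigma> Tb = cclass \<Sigma> \<Phi>" using lift_down[OF 1(1) c(1) 1(3)] by blast
  obtain Ta where a: "cons Ta" "\<Phi>2 \<subseteq> Ta" "cclass \<Sigma> Ta = cclass \<Sigma> \<Phi>" using lift_up[OF c(1) 1(2) 1(4)] by blast
  obtain Tc where cc: "cons Tc" "Tc \<subseteq> succ_type \<Phi>2" "cclass \<Sigma> Tc = cclass \<Sigma> \<Psi>" using lift_down[OF s(2) c(2) 1(5)] by blast
  obtain Td where d: "cons Td" "succ_type \<Phi>1 \<subseteq> Td" "cclass \<Sigma> Td = cclass \<Sigma> \<Psi>" using lift_up[OF c(2) s(1) 1(6)] by blast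
  have "clab \<Sigma> Ta = clab \<Sigma> \<Phi>" "clab \<Sigma> Tb = clab \<Sigma> \<Phi>" "clab \<Sigma> Tc = clab \<Sigma> \<Psi>" "clab \<Sigma> Td = clab \<Sigma> \<Psi>"
    using cclass_eq a b cc d c by blast+
  then show ?thesis using 1 a b cc d by blast
qed

lemma in_clab: "x \<in> \<Sigma> \<Longrightarrow> clab \<Sigma> T = l \<Longrightarrow> x \<in> l \<longleftrightarrow> x \<in> T"
  unfolding clab_def by blast

definition sens_pt :: "fm set \<Rightarrow> fm set \<Rightarrow> fm set \<Rightarrow> bool" where
  "sens_pt \<Sigma> lx ly \<longleftrightarrow> (\<forall>\<phi>. TX \<phi> \<in> \<Sigma> \<longrightarrow> (TX \<phi> \<in> lx \<longleftrightarrow> \<phi> \<in> ly)) \<and>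
     (\<forall>\<phi>. TY \<phi> \<in> \<Sigma> \<longrightarrow> (TY \<phi> \<in> ly \<longleftrightarrow> \<phi> \<in> lx)) \<and>
     (\<forall>\<phi>. TG \<phi> \<in> \<Sigma> \<longrightarrow> (TG \<phi> \<in> lx \<longleftrightarrow> \<phi> \<in> lx \<and> TG \<phi> \<in> ly)) \<and>
     (\<forall>\<phi>. TH \<phi> \<in> \<Sigma> \<longrightarrow> (TH \<phi> \<in> ly \<longleftrightarrow> \<phi> \<in> ly \<and> TH \<phi> \<in> lx)) \<and>
     (\<forall>\<phi> \<psi>. TU \<phi> \<psi> \<in> \<Sigma> \<longrightarrow>
        (TU \<phi> \<psi> \<in> lx \<longleftrightarrow> \<psi> \<in> lx \<or> (\<phi> \<in> lx \<and> TU \<phi> \<psi> \<in> ly))) \<and>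
     (\<forall>\<phi> \<psi>. TS \<phi> \<psi> \<in> \<Sigma> \<longrightarrow>
        (TS \<phi> \<psi> \<in> ly \<longleftrightarrow> \<psi> \<in> ly \<or> (\<phi> \<in> ly \<and> TS \<phi> \<psi> \<in> lx)))"

lemma sensible_alt: "sensible \<Sigma> W lab R \<longleftrightarrow> (\<forall>w\<in>W. \<forall>v\<in>W. R w v \<longrightarrow> sens_pt \<Sigma> (lab w) (lab v))"
  unfolding sensible_def sens_pt_def by simp

lemma sens_core:
  assumes sc: "subformula_closed \<Sigma>"
    and cs: "cons \<Phi>1" "cons \<Phi>2" "cons Ta" "cons Tb" "cons Tc" "cons Td"
    and h: "\<Phi>2 \<subseteq> Ta" "clab \<Sigma> Ta = lx" "Tb \<subseteq> \<Phi>1" "clab \<Sigma> Tb = lx"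
     "Tc \<subseteq> succ_type \<Phi>2" "clab \<Sigma> Tc = ly" "succ_type \<Phi>1 \<subseteq> Td" "clab \<Sigma> Td = ly"
  shows
    "(\<forall>\<phi>. TX \<phi> \<in> \<Sigma> \<longrightarrow> (TX \<phi> \<in> lx \<longleftrightarrow> \<phi> \<in> ly)) \<and>
     (\<forall>\<phi>. TY \<phi> \<in> \<Sigma> \<longrightarrow> (TY \<phi> \<in> ly \<longleftrightarrow> \<phi> \<in> lx)) \<and>
     (\<forall>\<phi>. TG \<phi> \<in> \<Sigma> \<longrightarrow> (TG \<phi> \<in> lx \<longleftrightarrow> \<phi> \<in> lx \<and> TG \<phi> \<in> ly)) \<and>
     (\<forall>\<phi>. TH \<phi> \<in> \<Sigma> \<longrightarrow> (TH \<phi> \<in> ly \<longleftrightarrow> \<phi> \<in> ly \<and> TH \<phi> \<in> lx)) \<and>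
     (\<forall>\<phi> \<psi>. TU \<phi> \<psi> \<in> \<Sigma> \<longrightarrow>
        (TU \<phi> \<psi> \<in> lx \<longleftrightarrow> \<psi> \<in> lx \<or> (\<phi> \<in> lx \<and> TU \<phi> \<psi> \<in> ly))) \<and>
     (\<forall>\<phi> \<psi>. TS \<phi> \<psi> \<in> \<Sigma> \<longrightarrow>
        (TS \<phi> \<psi> \<in> ly \<longleftrightarrow> \<psi> \<in> ly \<or> (\<phi> \<in> ly \<and> TS \<phi> \<psi> \<in> lx)))"
proof (intro conjI allI impI)
  note s = sc_simps[OF sc]
  have S1: "x \<in> succ_type \<Phi>1 \<longleftrightarrow> TX x \<in> \<Phi>1" "x \<in> succ_type \<Phi>2 \<longleftrightarrow> TX x \<in> \<Phi>2" for x
    unfolding succ_type_def by simp_all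
  have XY1: "TX (TY x) \<in> \<Phi>1 \<longleftrightarrow> x \<in> \<Phi>1" "TX (TY x) \<in> \<Phi>2 \<longleftrightarrow> x \<in> \<Phi>2" for x
    using cons_mp1 cs(1,2) g_iffD1[OF ax_XY] g_iffD2[OF ax_XY] by blast+
  fix a
  {
    assume m: "TX a \<in> \<Sigma>"
    then have ma: "a \<in> \<Sigma>" using s by blast
    show "TX a \<in> lx \<longleftrightarrow> a \<in> ly"
    proof
      assume "TX a \<in> lx" then have "TX a \<in> Tb" using in_clab[OF m h(4)] by blast
      then have "a \<in> Td" using h(3,7) S1 by blast
      then show "a \<in> ly" using in_clab[OF ma h(8)] by blast
    next
      assume "a \<in> ly" then have "a \<in> Tc" using in_clab[OF ma h(6)] by blast
      then have "TX a \<in> Ta" using h(1,5) S1 by blast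
      then show "TX a \<in> lx" using in_clab[OF m h(2)] by blast
    qed
  }
  {
    assume m: "TY a \<in> \<Sigma>"
    then have ma: "a \<in> \<Sigma>" using s by blast
    show "TY a \<in> ly \<longleftrightarrow> a \<in> lx"
    proof
      assume "TY a \<in> ly" then have "TY a \<in> Tc" using in_clab[OF m h(6)] by blast
      then have "a \<in> Ta" using h(1,5) S1 XY1 by blast
      then show "a \<in> lx" using in_clab[OF ma h(2)] by blast
    next
      assume "a \<in> lx" then have "a \<in> Tb" using in_clab[OF ma h(4)] by blast
      then have "TY a \<in> Td" using h(3,7) S1 XY1 by blast
      then show "TY a \<in> ly" using in_clab[OF m h(8)] by blast
    qed
  }
  {
    assume m: "TG a \<in> \<Sigma>"
    then have ma: "a \<in> \<Sigma>" using s by blast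
    show "TG a \<in> lx \<longleftrightarrow> a \<in> lx \<and> TG a \<in> ly"
    proof
      assume "TG a \<in> lx" then have t: "TG a \<in> Tb" using in_clab[OF m h(4)] by blast
      then have "a \<in> Tb" using cons_mp1[OF cs(4) _ G_fix1] by blast
      moreover have "TX (TG a) \<in> Tb" using cons_mp1[OF cs(4) t G_fix2] .
      then have "TG a \<in> Td" using h(3,7) S1 by blast
      ultimately show "a \<in> lx \<and> TG a \<in> ly" using in_clab[OF ma h(4)] in_clab[OF m h(8)] by blast
    next
      assume "a \<in> lx \<and> TG a \<in> ly"
      then have "a \<in> Ta" "TG a \<in> Tc" using in_clab[OF ma h(2)] in_clab[OF m h(6)] by blast+
      moreover then have "TX (TG a) \<in> Ta" using h(1,5) S1 by blast
      ultimately have "TG a \<in> Ta" using cons_mp2[OF cs(3) _ _ G_unfold] by blast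
      then show "TG a \<in> lx" using in_clab[OF m h(2)] by blast
    qed
  }
  {
    assume m: "TH a \<in> \<Sigma>"
    then have ma: "a \<in> \<Sigma>" using s by blast
    show "TH a \<in> ly \<longleftrightarrow> a \<in> ly \<and> TH a \<in> lx"
    proof
      assume "TH a \<in> ly" then have t: "TH a \<in> Tc" using in_clab[OF m h(6)] by blast
      then have "a \<in> Tc" using cons_mp1[OF cs(5) _ H_fix1] by blast
      moreover have "TY (TH a) \<in> Tc" using cons_mp1[OF cs(5) t H_fix2] .
      then have "TH a \<in> Ta" using h(1,5) S1 XY1 by blast
      ultimately show "a \<in> ly \<and> TH a \<in> lx" using in_clab[OF ma h(6)] in_clab[OF m h(2)] by blast
    next
      assume "a \<in> ly \<and> TH a \<in> lx"
      then have "a \<in> Td" "TH a \<in> Tb" using in_clab[OF ma h(8)] in_clab[OF m h(4)] by blast+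
      moreover then have "TY (TH a) \<in> Td" using h(3,7) S1 XY1 by blast
      ultimately have "TH a \<in> Td" using cons_mp2[OF cs(6) _ _ H_unfold] by blast
      then show "TH a \<in> ly" using in_clab[OF m h(8)] by blast
    qed
  }
  fix b
  {
    assume m: "TU a b \<in> \<Sigma>"
    then have ma: "a \<in> \<Sigma>" "b \<in> \<Sigma>" using s by blast+
    show "TU a b \<in> lx \<longleftrightarrow> b \<in> lx \<or> (a \<in> lx \<and> TU a b \<in> ly)"
    proof
      assume "TU a b \<in> lx" then have t: "TU a b \<in> Tb" using in_clab[OF m h(4)] by blast
      then have "b \<in> Tb \<or> (a \<in> Tb \<and> TX (TU a b) \<in> Tb)"
        using cons_mp1[OF cs(4) t U_unfold] cons_Or[OF cs(4)] cons_And[OF cs(4)] by blast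
      moreover have "TX (TU a b) \<in> Tb \<Longrightarrow> TU a b \<in> Td" using h(3,7) S1 by blast
      ultimately show "b \<in> lx \<or> (a \<in> lx \<and> TU a b \<in> ly)"
        using in_clab[OF ma(1) h(4)] in_clab[OF ma(2) h(4)] in_clab[OF m h(8)] by blast
    next
      assume "b \<in> lx \<or> (a \<in> lx \<and> TU a b \<in> ly)"
      then show "TU a b \<in> lx"
      proof
        assume "b \<in> lx" then have "b \<in> Tb" using in_clab[OF ma(2) h(4)] by blast
        then have "TU a b \<in> Tb" using cons_mp1[OF cs(4) _ U_fold1] by blast
        then show ?thesis using in_clab[OF m h(4)] by blast
      next
        assume "a \<in> lx \<and> TU a b \<in> ly"
        then have "a \<in> Ta" "TU a b \<in> Tc" using in_clab[OF ma(1) h(2)] in_clab[OF m h(6)] by blast+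
        moreover then have "TX (TU a b) \<in> Ta" using h(1,5) S1 by blast
        ultimately have "TU a b \<in> Ta" using cons_mp2[OF cs(3) _ _ U_fold2] by blast
        then show ?thesis using in_clab[OF m h(2)] by blast
      qed
    qed
  }
  {
    assume m: "TS a b \<in> \<Sigma>"
    then have ma: "a \<in> \<Sigma>" "b \<in> \<Sigma>" using s by blast+
    show "TS a b \<in> ly \<longleftrightarrow> b \<in> ly \<or> (a \<in> ly \<and> TS a b \<in> lx)"
    proof
      assume "TS a b \<in> ly" then have t: "TS a b \<in> Tc" using in_clab[OF m h(6)] by blast
      then have "b \<in> Tc \<or> (a \<in> Tc \<and> TY (TS a b) \<in> Tc)"
        using cons_mp1[OF cs(5) t S_unfold] cons_Or[OF cs(5)] cons_And[OF cs(5)] by blast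
      moreover have "TY (TS a b) \<in> Tc \<Longrightarrow> TS a b \<in> Ta" using h(1,5) S1 XY1 by blast
      ultimately show "b \<in> ly \<or> (a \<in> ly \<and> TS a b \<in> lx)"
        using in_clab[OF ma(1) h(6)] in_clab[OF ma(2) h(6)] in_clab[OF m h(2)] by blast
    next
      assume "b \<in> ly \<or> (a \<in> ly \<and> TS a b \<in> lx)"
      then show "TS a b \<in> ly"
      proof
        assume "b \<in> ly" then have "b \<in> Td" using in_clab[OF ma(2) h(8)] by blast
        then have "TS a b \<in> Td" using cons_mp1[OF cs(6) _ S_fold1] by blast
        then show ?thesis using in_clab[OF m h(8)] by blast
      next
        assume "a \<in> ly \<and> TS a b \<in> lx"
        then have "a \<in> Td" "TS a b \<in> Tb" using in_clab[OF ma(1) h(8)] in_clab[OF m h(4)] by blast+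
        moreover then have "TY (TS a b) \<in> Td" using h(3,7) S1 XY1 by blast
        ultimately have "TS a b \<in> Td" using cons_mp2[OF cs(6) _ _ S_fold2] by blast
        then show ?thesis using in_clab[OF m h(8)] by blast
      qed
    qed
  }
qed

lemma sensible: "subformula_closed \<Sigma> \<Longrightarrow> sensible \<Sigma> (qW \<Sigma>) (qlab \<Sigma>) (qRplus \<Sigma>)"
  unfolding sensible_alt
proof (intro ballI impI)
  fix w v assume sc: "subformula_closed \<Sigma>" and w: "w \<in> qW \<Sigma>" "v \<in> qW \<Sigma>" and R: "qRplus \<Sigma> w v"
  obtain \<Phi> \<Psi> where p: "cons \<Phi>" "w = cclass \<Sigma> \<Phi>" "cons \<Psi>" "v = cclass \<Sigma> \<Psi>" using w by (meson qW_E)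
  then have l: "qlab \<Sigma> w = clab \<Sigma> \<Phi>" "qlab \<Sigma> v = clab \<Sigma> \<Psi>" using qlab_cls by blast+
  obtain \<Phi>1 \<Phi>2 Ta Tb Tc Td where th: "cons \<Phi>1" "cons \<Phi>2" "cons Ta" "cons Tb" "cons Tc" "cons Td"
     "\<Phi>2 \<subseteq> Ta" "clab \<Sigma> Ta = clab \<Sigma> \<Phi>" "Tb \<subseteq> \<Phi>1" "clab \<Sigma> Tb = clab \<Sigma> \<Phi>"
     "Tc \<subseteq> succ_type \<Phi>2" "clab \<Sigma> Tc = clab \<Sigma> \<Psi>" "succ_type \<Phi>1 \<subseteq> Td" "clab \<Sigma> Td = clab \<Sigma> \<Psi>"
    using Rplus_thetas[OF R[unfolded p(2,4)] p(1,3)] by metis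
  show "sens_pt \<Sigma> (qlab \<Sigma> w) (qlab \<Sigma> v)" unfolding l sens_pt_def using sens_core[OF sc th] .
qed




definition lst :: "'a set \<Rightarrow> 'a list" where "lst A = (SOME xs. set xs = A)"

lemma set_lst: "finite A \<Longrightarrow> set (lst A) = A"
  unfolding lst_def using someI_ex[OF finite_list] by blast

definition bet :: "fm set \<Rightarrow> fm" where "bet a = conjs (lst a)"
definition gam :: "fm set \<Rightarrow> fm set \<Rightarrow> fm" where "gam \<Sigma> a = disjs (lst (\<Sigma> - a))"

lemma bet_mem: "cons \<Psi> \<Longrightarrow> finite a \<Longrightarrow> bet a \<in> \<Psi> \<longleftrightarrow> a \<subseteq> \<Psi>"
  unfolding bet_def using conjs_mem set_lst by metis

lemma gam_mem: "cons \<Psi> \<Longrightarrow> finite \<Sigma> \<Longrightarrow> gam \<Sigma> a \<in> \<Psi> \<longleftrightarrow> (\<exists>x\<in>\<Sigma> - a. x \<in> \<Psi>)"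
  unfolding gam_def using cons_disjs_iff set_lst[of "\<Sigma> - a"] by simp

lemma lab_ok: "cons \<Theta> \<Longrightarrow> finite \<Sigma> \<Longrightarrow> a \<subseteq> \<Sigma> \<Longrightarrow>
   (bet a \<in> \<Theta> \<and> gam \<Sigma> a \<notin> \<Theta>) \<longleftrightarrow> clab \<Sigma> \<Theta> = a"
  using bet_mem[of \<Theta> a] gam_mem[of \<Theta> \<Sigma> a] finite_subset[of a \<Sigma>] unfolding clab_def by blast

definition Ef :: "fm set \<Rightarrow> fm set \<Rightarrow> fm" where
  "Ef \<Sigma> b = Coimp top (Imp (bet b) (gam \<Sigma> b))"

lemma coimp_mem: "cons \<Psi> \<Longrightarrow> Coimp x y \<in> \<Psi> \<longleftrightarrow> (\<exists>\<Theta>. cons \<Theta> \<and> \<Theta> \<subseteq> \<Psi> \<and> x \<in> \<Theta> \<and> y \<notin> \<Theta>)"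
  using witness_down cons_Coimp2 by blast

lemma imp_nmem: "cons \<Psi> \<Longrightarrow> Imp x y \<notin> \<Psi> \<longleftrightarrow> (\<exists>\<Theta>. cons \<Theta> \<and> \<Psi> \<subseteq> \<Theta> \<and> x \<in> \<Theta> \<and> y \<notin> \<Theta>)"
  using witness_up cons_Imp by blast

lemma Ef_mem:
  assumes c: "cons \<Psi>" and f: "finite \<Sigma>" and b: "b \<subseteq> \<Sigma>"
  shows "Ef \<Sigma> b \<in> \<Psi> \<longleftrightarrow> b \<in> cL \<Sigma> \<Psi>"
proof
  assume "Ef \<Sigma> b \<in> \<Psi>"
  then obtain \<Theta> where t: "cons \<Theta>" "\<Theta> \<subseteq> \<Psi>" "Imp (bet b) (gam \<Sigma> b) \<notin> \<Theta>"
    unfolding Ef_def using coimp_mem[OF c] by blast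
  then obtain \<Theta>' where t': "cons \<Theta>'" "\<Theta> \<subseteq> \<Theta>'" "bet b \<in> \<Theta>'" "gam \<Sigma> b \<notin> \<Theta>'"
    using imp_nmem by blast
  have "comp \<Psi> \<Theta>'" using up_lin[OF t(1) t(2) t'(2) c t'(1)] unfolding comp_def by blast
  moreover have "clab \<Sigma> \<Theta>' = b" using lab_ok[OF t'(1) f b] t' by blast
  ultimately show "b \<in> cL \<Sigma> \<Psi>" unfolding cL_alt using t'(1) by blast
next
  assume "b \<in> cL \<Sigma> \<Psi>"
  then obtain \<Theta> where t: "cons \<Theta>" "comp \<Psi> \<Theta>" "clab \<Sigma> \<Theta> = b" unfolding cL_alt by blast
  then have bg: "bet b \<in> \<Theta>" "gam \<Sigma> b \<notin> \<Theta>" using lab_ok[OF t(1) f b] by blast+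
  have ni: "Imp (bet b) (gam \<Sigma> b) \<notin> \<Theta>" using bg cons_Imp[OF t(1)] by blast
  show "Ef \<Sigma> b \<in> \<Psi>"
  proof (cases "\<Theta> \<subseteq> \<Psi>")
    case True
    then show ?thesis unfolding Ef_def using coimp_mem[OF c] ni t(1) cons_top[OF t(1)] by blast
  next
    case False
    then have "\<Psi> \<subseteq> \<Theta>" using t(2) comp_def by blast
    then have "Imp (bet b) (gam \<Sigma> b) \<notin> \<Psi>" using ni by blast
    then show ?thesis unfolding Ef_def using coimp_mem[OF c] c cons_top[OF c] by blast
  qed
qed

lemma neg_mem:
  assumes c: "cons \<Psi>" and inv: "\<And>\<Theta>. cons \<Theta> \<Longrightarrow> \<Psi> \<subseteq> \<Theta> \<Longrightarrow> x \<in> \<Theta> \<Longrightarrow> x \<in> \<Psi>"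
  shows "neg x \<in> \<Psi> \<longleftrightarrow> x \<notin> \<Psi>"
proof
  assume "neg x \<in> \<Psi>"
  then show "x \<notin> \<Psi>" using cons_Imp[OF c] cons_bot[OF c] unfolding neg_def by blast
next
  assume n: "x \<notin> \<Psi>"
  show "neg x \<in> \<Psi>"
  proof (rule ccontr)
    assume "neg x \<notin> \<Psi>"
    then obtain \<Theta> where "cons \<Theta>" "\<Psi> \<subseteq> \<Theta>" "x \<in> \<Theta>" unfolding neg_def using imp_nmem[OF c] by blast
    then show False using inv n by blast
  qed
qed

lemma Ef_inv: "cons \<Psi> \<Longrightarrow> cons \<Theta> \<Longrightarrow> \<Psi> \<subseteq> \<Theta> \<Longrightarrow> finite \<Sigma> \<Longrightarrow> b \<subseteq> \<Sigma> \<Longrightarrow>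
   Ef \<Sigma> b \<in> \<Theta> \<longleftrightarrow> Ef \<Sigma> b \<in> \<Psi>"
  using Ef_mem cL_eq[of \<Psi> \<Theta>] unfolding comp_def by metis

lemma negEf_mem: "cons \<Psi> \<Longrightarrow> finite \<Sigma> \<Longrightarrow> b \<subseteq> \<Sigma> \<Longrightarrow> neg (Ef \<Sigma> b) \<in> \<Psi> \<longleftrightarrow> b \<notin> cL \<Sigma> \<Psi>"
  using neg_mem[of \<Psi> "Ef \<Sigma> b"] Ef_inv Ef_mem by metis

definition PS :: "fm set \<Rightarrow> fm set list" where "PS \<Sigma> = lst (Pow \<Sigma>)"

definition Lm :: "fm set \<Rightarrow> fm set set \<Rightarrow> fm" where
  "Lm \<Sigma> L = conjs (map (\<lambda>b. if b \<in> L then Ef \<Sigma> b else neg (Ef \<Sigma> b)) (PS \<Sigma>))"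
definition NLm :: "fm set \<Rightarrow> fm set set \<Rightarrow> fm" where
  "NLm \<Sigma> L = disjs (map (\<lambda>b. if b \<in> L then neg (Ef \<Sigma> b) else Ef \<Sigma> b) (PS \<Sigma>))"

lemma cL_sub: "cL \<Sigma> \<Psi> \<subseteq> Pow \<Sigma>"
  unfolding cL_def clab_def by blast

lemma Lm_mem:
  assumes c: "cons \<Psi>" and f: "finite \<Sigma>" and L: "L \<subseteq> Pow \<Sigma>"
  shows "Lm \<Sigma> L \<in> \<Psi> \<longleftrightarrow> cL \<Sigma> \<Psi> = L"
proof -
  have ps: "set (PS \<Sigma>) = Pow \<Sigma>" unfolding PS_def using set_lst[of "Pow \<Sigma>"] f by simp
  have "Lm \<Sigma> L \<in> \<Psi> \<longleftrightarrow> (\<forall>b\<in>Pow \<Sigma>. (if b \<in> L then Ef \<Sigma> b else neg (Ef \<Sigma> b)) \<in> \<Psi>)"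
    unfolding Lm_def using conjs_mem[OF c] ps by auto
  also have "\<dots> \<longleftrightarrow> (\<forall>b\<in>Pow \<Sigma>. b \<in> L \<longleftrightarrow> b \<in> cL \<Sigma> \<Psi>)"
    using Ef_mem[OF c f] negEf_mem[OF c f] by auto
  also have "\<dots> \<longleftrightarrow> cL \<Sigma> \<Psi> = L" using L cL_sub[of \<Sigma> \<Psi>] by blast
  finally show ?thesis .
qed

lemma NLm_mem:
  assumes c: "cons \<Psi>" and f: "finite \<Sigma>" and L: "L \<subseteq> Pow \<Sigma>"
  shows "NLm \<Sigma> L \<in> \<Psi> \<longleftrightarrow> cL \<Sigma> \<Psi> \<noteq> L"
proof -
  have ps: "set (PS \<Sigma>) = Pow \<Sigma>" unfolding PS_def using set_lst[of "Pow \<Sigma>"] f by simp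
  have "NLm \<Sigma> L \<in> \<Psi> \<longleftrightarrow> (\<exists>b\<in>Pow \<Sigma>. (if b \<in> L then neg (Ef \<Sigma> b) else Ef \<Sigma> b) \<in> \<Psi>)"
    unfolding NLm_def cons_disjs_iff[OF c] set_map ps by blast
  also have "\<dots> \<longleftrightarrow> (\<exists>b\<in>Pow \<Sigma>. \<not> (b \<in> L \<longleftrightarrow> b \<in> cL \<Sigma> \<Psi>))"
    using Ef_mem[OF c f] negEf_mem[OF c f] by auto
  also have "\<dots> \<longleftrightarrow> cL \<Sigma> \<Psi> \<noteq> L" using L cL_sub[of \<Sigma> \<Psi>] by blast
  finally show ?thesis .
qed

definition dnf :: "fm set \<Rightarrow> fm set \<Rightarrow> fm set set \<Rightarrow> fm" where
  "dnf \<Sigma> a L = And (Lm \<Sigma> L) (Coimp (bet a) (gam \<Sigma> a))"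
definition nsup :: "fm set \<Rightarrow> fm set \<Rightarrow> fm set set \<Rightarrow> fm" where
  "nsup \<Sigma> a L = Or (NLm \<Sigma> L) (Imp (bet a) (gam \<Sigma> a))"

lemma dnf_mem:
  assumes c: "cons \<Psi>" and f: "finite \<Sigma>" and a: "a \<subseteq> \<Sigma>" and L: "L \<subseteq> Pow \<Sigma>"
  shows "dnf \<Sigma> a L \<in> \<Psi> \<longleftrightarrow> (\<exists>\<Theta>. cons \<Theta> \<and> \<Theta> \<subseteq> \<Psi> \<and> clab \<Sigma> \<Theta> = a \<and> cL \<Sigma> \<Theta> = L)"
proof -
  have "dnf \<Sigma> a L \<in> \<Psi> \<longleftrightarrow> cL \<Sigma> \<Psi> = L \<and> (\<exists>\<Theta>. cons \<Theta> \<and> \<Theta> \<subseteq> \<Psi> \<and> bet a \<in> \<Theta> \<and> gam \<Sigma> a \<notin> \<Theta>)"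
    unfolding dnf_def using cons_And[OF c] Lm_mem[OF c f L] coimp_mem[OF c] by blast
  also have "\<dots> \<longleftrightarrow> cL \<Sigma> \<Psi> = L \<and> (\<exists>\<Theta>. cons \<Theta> \<and> \<Theta> \<subseteq> \<Psi> \<and> clab \<Sigma> \<Theta> = a)"
    using lab_ok[OF _ f a] by blast
  also have "\<dots> \<longleftrightarrow> (\<exists>\<Theta>. cons \<Theta> \<and> \<Theta> \<subseteq> \<Psi> \<and> clab \<Sigma> \<Theta> = a \<and> cL \<Sigma> \<Theta> = L)"
    using cL_eq[of _ \<Psi> \<Sigma>] c unfolding comp_def by blast
  finally show ?thesis .
qed

lemma nsup_mem:
  assumes c: "cons \<Psi>" and f: "finite \<Sigma>" and a: "a \<subseteq> \<Sigma>" and L: "L \<subseteq> Pow \<Sigma>"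
  shows "nsup \<Sigma> a L \<in> \<Psi> \<longleftrightarrow> \<not> (\<exists>\<Theta>. cons \<Theta> \<and> \<Psi> \<subseteq> \<Theta> \<and> clab \<Sigma> \<Theta> = a \<and> cL \<Sigma> \<Theta> = L)"
proof -
  have "nsup \<Sigma> a L \<in> \<Psi> \<longleftrightarrow> cL \<Sigma> \<Psi> \<noteq> L \<or> \<not> (\<exists>\<Theta>. cons \<Theta> \<and> \<Psi> \<subseteq> \<Theta> \<and> bet a \<in> \<Theta> \<and> gam \<Sigma> a \<notin> \<Theta>)"
    unfolding nsup_def using cons_Or[OF c] NLm_mem[OF c f L] imp_nmem[OF c] by blast
  also have "\<dots> \<longleftrightarrow> cL \<Sigma> \<Psi> \<noteq> L \<or> \<not> (\<exists>\<Theta>. cons \<Theta> \<and> \<Psi> \<subseteq> \<Theta> \<and> clab \<Sigma> \<Theta> = a)"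
    using lab_ok[OF _ f a] by blast
  also have "\<dots> \<longleftrightarrow> \<not> (\<exists>\<Theta>. cons \<Theta> \<and> \<Psi> \<subseteq> \<Theta> \<and> clab \<Sigma> \<Theta> = a \<and> cL \<Sigma> \<Theta> = L)"
    using cL_eq[of \<Psi> _ \<Sigma>] c unfolding comp_def by blast
  finally show ?thesis .
qed




definition pairs :: "fm set \<Rightarrow> fm set set set \<Rightarrow> (fm set \<times> fm set set) set" where
  "pairs \<Sigma> K = {(clab \<Sigma> \<Theta>, cL \<Sigma> \<Theta>) | \<Theta>. cons \<Theta> \<and> cclass \<Sigma> \<Theta> \<in> K}"

lemma pairs_sub: "pairs \<Sigma> K \<subseteq> Pow \<Sigma> \<times> Pow (Pow \<Sigma>)"
  unfolding pairs_def using cL_sub unfolding clab_def by blast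

lemma pairs_fin: "finite \<Sigma> \<Longrightarrow> finite (pairs \<Sigma> K)"
  using pairs_sub finite_subset by (metis finite_Pow_iff finite_SigmaI)

definition upf :: "fm set \<Rightarrow> fm set set set \<Rightarrow> fm" where
  "upf \<Sigma> K = disjs (map (\<lambda>(a,L). dnf \<Sigma> a L) (lst (pairs \<Sigma> K)))"
definition dnK :: "fm set \<Rightarrow> fm set set set \<Rightarrow> fm" where
  "dnK \<Sigma> K = conjs (map (\<lambda>(a,L). nsup \<Sigma> a L) (lst (pairs \<Sigma> K)))"

lemma upf_mem:
  assumes c: "cons \<Psi>" and f: "finite \<Sigma>"
  shows "upf \<Sigma> K \<in> \<Psi> \<longleftrightarrow> (\<exists>\<Theta>. cons \<Theta> \<and> \<Theta> \<subseteq> \<Psi> \<and> cclass \<Sigma> \<Theta> \<in> K)"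
proof -
  have sp: "set (lst (pairs \<Sigma> K)) = pairs \<Sigma> K" using set_lst pairs_fin[OF f] by blast
  have "upf \<Sigma> K \<in> \<Psi> \<longleftrightarrow> (\<exists>p\<in>pairs \<Sigma> K. dnf \<Sigma> (fst p) (snd p) \<in> \<Psi>)"
    unfolding upf_def cons_disjs_iff[OF c] set_map sp by (auto simp: case_prod_beta)
  also have "\<dots> \<longleftrightarrow> (\<exists>\<Theta>. cons \<Theta> \<and> \<Theta> \<subseteq> \<Psi> \<and> cclass \<Sigma> \<Theta> \<in> K)"
  proof
    assume "\<exists>p\<in>pairs \<Sigma> K. dnf \<Sigma> (fst p) (snd p) \<in> \<Psi>"
    then obtain \<Theta>' where t': "cons \<Theta>'" "cclass \<Sigma> \<Theta>' \<in> K" "dnf \<Sigma> (clab \<Sigma> \<Theta>') (cL \<Sigma> \<Theta>') \<in> \<Psi>"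
      unfolding pairs_def by auto
    have s: "clab \<Sigma> \<Theta>' \<subseteq> \<Sigma>" "cL \<Sigma> \<Theta>' \<subseteq> Pow \<Sigma>" using cL_sub unfolding clab_def by blast+
    obtain \<Theta> where "cons \<Theta>" "\<Theta> \<subseteq> \<Psi>" "clab \<Sigma> \<Theta> = clab \<Sigma> \<Theta>'" "cL \<Sigma> \<Theta> = cL \<Sigma> \<Theta>'"
      using dnf_mem[OF c f s] t'(3) by blast
    then show "\<exists>\<Theta>. cons \<Theta> \<and> \<Theta> \<subseteq> \<Psi> \<and> cclass \<Sigma> \<Theta> \<in> K" using cclass_eq t' by metis
  next
    assume "\<exists>\<Theta>. cons \<Theta> \<and> \<Theta> \<subseteq> \<Psi> \<and> cclass \<Sigma> \<Theta> \<in> K"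
    then obtain \<Theta> where t: "cons \<Theta>" "\<Theta> \<subseteq> \<Psi>" "cclass \<Sigma> \<Theta> \<in> K" by blast
    have s: "clab \<Sigma> \<Theta> \<subseteq> \<Sigma>" "cL \<Sigma> \<Theta> \<subseteq> Pow \<Sigma>" using cL_sub unfolding clab_def by blast+
    have "dnf \<Sigma> (clab \<Sigma> \<Theta>) (cL \<Sigma> \<Theta>) \<in> \<Psi>" using dnf_mem[OF c f s] t by blast
    moreover have "(clab \<Sigma> \<Theta>, cL \<Sigma> \<Theta>) \<in> pairs \<Sigma> K" unfolding pairs_def using t by blast
    ultimately show "\<exists>p\<in>pairs \<Sigma> K. dnf \<Sigma> (fst p) (snd p) \<in> \<Psi>" by force
  qed
  finally show ?thesis .
qed

lemma dnK_mem:
  assumes c: "cons \<Psi>" and f: "finite \<Sigma>"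
  shows "dnK \<Sigma> K \<in> \<Psi> \<longleftrightarrow> \<not> (\<exists>\<Theta>. cons \<Theta> \<and> \<Psi> \<subseteq> \<Theta> \<and> cclass \<Sigma> \<Theta> \<in> K)"
proof -
  have sp: "set (lst (pairs \<Sigma> K)) = pairs \<Sigma> K" using set_lst pairs_fin[OF f] by blast
  have "dnK \<Sigma> K \<in> \<Psi> \<longleftrightarrow> (\<forall>p\<in>pairs \<Sigma> K. nsup \<Sigma> (fst p) (snd p) \<in> \<Psi>)"
    unfolding dnK_def conjs_mem[OF c] set_map sp by (auto simp: case_prod_beta)
  also have "\<dots> \<longleftrightarrow> \<not> (\<exists>\<Theta>. cons \<Theta> \<and> \<Psi> \<subseteq> \<Theta> \<and> cclass \<Sigma> \<Theta> \<in> K)"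
  proof
    assume h: "\<forall>p\<in>pairs \<Sigma> K. nsup \<Sigma> (fst p) (snd p) \<in> \<Psi>"
    show "\<not> (\<exists>\<Theta>. cons \<Theta> \<and> \<Psi> \<subseteq> \<Theta> \<and> cclass \<Sigma> \<Theta> \<in> K)"
    proof
      assume "\<exists>\<Theta>. cons \<Theta> \<and> \<Psi> \<subseteq> \<Theta> \<and> cclass \<Sigma> \<Theta> \<in> K"
      then obtain \<Theta> where t: "cons \<Theta>" "\<Psi> \<subseteq> \<Theta>" "cclass \<Sigma> \<Theta> \<in> K" by blast
      have s: "clab \<Sigma> \<Theta> \<subseteq> \<Sigma>" "cL \<Sigma> \<Theta> \<subseteq> Pow \<Sigma>" using cL_sub unfolding clab_def by blast+
      have "(clab \<Sigma> \<Theta>, cL \<Sigma> \<Theta>) \<in> pairs \<Sigma> K" unfolding pairs_def using t by blast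
      then have "nsup \<Sigma> (clab \<Sigma> \<Theta>) (cL \<Sigma> \<Theta>) \<in> \<Psi>" using h by force
      then show False using nsup_mem[OF c f s] t by blast
    qed
  next
    assume h: "\<not> (\<exists>\<Theta>. cons \<Theta> \<and> \<Psi> \<subseteq> \<Theta> \<and> cclass \<Sigma> \<Theta> \<in> K)"
    show "\<forall>p\<in>pairs \<Sigma> K. nsup \<Sigma> (fst p) (snd p) \<in> \<Psi>"
    proof
      fix p assume "p \<in> pairs \<Sigma> K"
      then obtain \<Theta>' where t': "cons \<Theta>'" "cclass \<Sigma> \<Theta>' \<in> K" "p = (clab \<Sigma> \<Theta>', cL \<Sigma> \<Theta>')"
        unfolding pairs_def by auto
      have s: "clab \<Sigma> \<Theta>' \<subseteq> \<Sigma>" "cL \<Sigma> \<Theta>' \<subseteq> Pow \<Sigma>" using cL_sub unfolding clab_def by blast+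
      have "\<not> (\<exists>\<Theta>. cons \<Theta> \<and> \<Psi> \<subseteq> \<Theta> \<and> clab \<Sigma> \<Theta> = clab \<Sigma> \<Theta>' \<and> cL \<Sigma> \<Theta> = cL \<Sigma> \<Theta>')"
        using h cclass_eq t' by metis
      then show "nsup \<Sigma> (fst p) (snd p) \<in> \<Psi>" using nsup_mem[OF c f s] t'(3) by simp
    qed
  qed
  finally show ?thesis .
qed




lemma qlab_mem: "cons \<Theta> \<Longrightarrow> x \<in> \<Sigma> \<Longrightarrow> x \<in> qlab \<Sigma> (cclass \<Sigma> \<Theta>) \<longleftrightarrow> x \<in> \<Theta>"
  using qlab_cls unfolding clab_def by blast

lemma omega:
  assumes f: "finite \<Sigma>" and sc: "subformula_closed \<Sigma>"
  shows "omega_sensible \<Sigma> (qW \<Sigma>) (qlab \<Sigma>) (qRplus \<Sigma>)"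
  unfolding omega_sensible_def
proof (intro ballI conjI allI impI)
  fix w assume w: "w \<in> qW \<Sigma>"
  then obtain \<Phi>0 where p0: "cons \<Phi>0" "w = cclass \<Sigma> \<Phi>0" by (meson qW_E)
  define FR where "FR = {C \<in> qW \<Sigma>. \<exists>n. (qRplus \<Sigma> ^^ n) w C}"
  define BR where "BR = {C \<in> qW \<Sigma>. \<exists>n. (qRplus \<Sigma> ^^ n) C w}"
  have z: "(qRplus \<Sigma> ^^ 0) w w" by (rule relpowp_0_I)
  have wFR: "cclass \<Sigma> \<Phi>0 \<in> FR" unfolding FR_def using w z p0(2)[symmetric] by blast
  have wBR: "cclass \<Sigma> \<Phi>0 \<in> BR" unfolding BR_def using w z p0(2)[symmetric] by blast
  have FRs: "cclass \<Sigma> (succ_type \<Theta>) \<in> FR" if tc: "cons \<Theta>" "cclass \<Sigma> \<Theta> \<in> FR" for \<Theta>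
  proof -
    obtain n where n: "(qRplus \<Sigma> ^^ n) w (cclass \<Sigma> \<Theta>)" using tc unfolding FR_def by blast
    have "(qRplus \<Sigma> ^^ Suc n) w (cclass \<Sigma> (succ_type \<Theta>))"
      by (rule relpowp_Suc_I[OF n R0_Rplus[OF tc(1)]])
    then show ?thesis unfolding FR_def using qW_I cons_succ_type[OF tc(1)] by blast
  qed
  have BRp: "cclass \<Sigma> (pred_type \<Theta>) \<in> BR" if tc: "cons \<Theta>" "cclass \<Sigma> \<Theta> \<in> BR" for \<Theta>
  proof -
    obtain n where n: "(qRplus \<Sigma> ^^ n) (cclass \<Sigma> \<Theta>) w" using tc unfolding BR_def by blast
    have "(qRplus \<Sigma> ^^ Suc n) (cclass \<Sigma> (pred_type \<Theta>)) w"
      by (rule relpowp_Suc_I2[OF pred_R0_Rplus[OF tc(1)] n])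
    then show ?thesis unfolding BR_def using qW_I cons_pred_type[OF tc(1)] by blast
  qed
  note s = sc_simps[OF sc]
  {
    fix \<phi> assume g: "TG \<phi> \<in> \<Sigma> - qlab \<Sigma> w"
    show "\<exists>v\<in>qW \<Sigma>. \<exists>n. (qRplus \<Sigma> ^^ n) w v \<and> \<phi> \<notin> qlab \<Sigma> v"
    proof (rule ccontr)
      assume nv: "\<not> ?thesis"
      have m: "\<phi> \<in> \<Sigma>" using g s by blast
      have hp: "\<phi> \<in> \<Theta>" if "cons \<Theta>" "cclass \<Sigma> \<Theta> \<in> FR" for \<Theta>
        using nv that qlab_mem[OF that(1) m] unfolding FR_def by blast
      define \<chi> where "\<chi> = upf \<Sigma> FR"
      have g1: "gtl (Imp \<chi> (TX \<chi>))"
      proof (rule by_types)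
        fix \<Psi> assume c: "cons \<Psi>" "\<chi> \<in> \<Psi>"
        then obtain \<Theta> where t: "cons \<Theta>" "\<Theta> \<subseteq> \<Psi>" "cclass \<Sigma> \<Theta> \<in> FR" unfolding \<chi>_def using upf_mem[OF _ f] by blast
        have "\<chi> \<in> succ_type \<Psi>" unfolding \<chi>_def
          using upf_mem[OF cons_succ_type[OF c(1)] f] cons_succ_type[OF t(1)] succ_mono[OF t(2)] FRs[OF t(1,3)] by blast
        then show "TX \<chi> \<in> \<Psi>" unfolding succ_type_def by simp
      qed
      have g2: "gtl (Imp \<chi> \<phi>)"
      proof (rule by_types)
        fix \<Psi> assume c: "cons \<Psi>" "\<chi> \<in> \<Psi>"
        then obtain \<Theta> where t: "cons \<Theta>" "\<Theta> \<subseteq> \<Psi>" "cclass \<Sigma> \<Theta> \<in> FR" unfolding \<chi>_def using upf_mem[OF _ f] by blast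
        then show "\<phi> \<in> \<Psi>" using hp by blast
      qed
      have "\<chi> \<in> \<Phi>0" unfolding \<chi>_def using upf_mem[OF p0(1) f] wFR p0(1) by blast
      then have "TG \<phi> \<in> \<Phi>0" using cons_mp1[OF p0(1) _ g_trans[OF G_indR[OF g1] G_mono[OF g2]]] by blast
      then show False using g qlab_mem[OF p0(1)] p0(2) by blast
    qed
  }
  {
    fix \<phi> assume g: "TH \<phi> \<in> \<Sigma> - qlab \<Sigma> w"
    show "\<exists>v\<in>qW \<Sigma>. \<exists>n. (qRplus \<Sigma> ^^ n) v w \<and> \<phi> \<notin> qlab \<Sigma> v"
    proof (rule ccontr)
      assume nv: "\<not> ?thesis"
      have m: "\<phi> \<in> \<Sigma>" using g s by blast
      have hp: "\<phi> \<in> \<Theta>" if "cons \<Theta>" "cclass \<Sigma> \<Theta> \<in> BR" for \<Theta>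
        using nv that qlab_mem[OF that(1) m] unfolding BR_def by blast
      define \<chi> where "\<chi> = upf \<Sigma> BR"
      have g1: "gtl (Imp \<chi> (TY \<chi>))"
      proof (rule by_types)
        fix \<Psi> assume c: "cons \<Psi>" "\<chi> \<in> \<Psi>"
        then obtain \<Theta> where t: "cons \<Theta>" "\<Theta> \<subseteq> \<Psi>" "cclass \<Sigma> \<Theta> \<in> BR" unfolding \<chi>_def using upf_mem[OF _ f] by blast
        have "\<chi> \<in> pred_type \<Psi>" unfolding \<chi>_def
          using upf_mem[OF cons_pred_type[OF c(1)] f] cons_pred_type[OF t(1)] pred_mono[OF t(2)] BRp[OF t(1,3)] by blast
        then show "TY \<chi> \<in> \<Psi>" unfolding pred_type_def by simp
      qed
      have g2: "gtl (Imp \<chi> \<phi>)"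
      proof (rule by_types)
        fix \<Psi> assume c: "cons \<Psi>" "\<chi> \<in> \<Psi>"
        then obtain \<Theta> where t: "cons \<Theta>" "\<Theta> \<subseteq> \<Psi>" "cclass \<Sigma> \<Theta> \<in> BR" unfolding \<chi>_def using upf_mem[OF _ f] by blast
        then show "\<phi> \<in> \<Psi>" using hp by blast
      qed
      have "\<chi> \<in> \<Phi>0" unfolding \<chi>_def using upf_mem[OF p0(1) f] wBR p0(1) by blast
      then have "TH \<phi> \<in> \<Phi>0" using cons_mp1[OF p0(1) _ g_trans[OF H_indR[OF g1] H_mono[OF g2]]] by blast
      then show False using g qlab_mem[OF p0(1)] p0(2) by blast
    qed
  }
  {
    fix a b assume g: "TU a b \<in> qlab \<Sigma> w"
    show "\<exists>v\<in>qW \<Sigma>. \<exists>n. (qRplus \<Sigma> ^^ n) w v \<and> b \<in> qlab \<Sigma> v"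
    proof (rule ccontr)
      assume nv: "\<not> ?thesis"
      have gm: "TU a b \<in> \<Sigma>" "TU a b \<in> \<Phi>0" using g p0 qlab_cls unfolding clab_def by blast+
      then have m: "b \<in> \<Sigma>" using s by blast
      have hp: "b \<notin> \<Theta>" if "cons \<Theta>" "cclass \<Sigma> \<Theta> \<in> FR" for \<Theta>
        using nv that qlab_mem[OF that(1) m] unfolding FR_def by blast
      define \<theta> where "\<theta> = dnK \<Sigma> FR"
      have g1: "gtl (Imp b \<theta>)"
      proof (rule by_types)
        fix \<Psi> assume c: "cons \<Psi>" "b \<in> \<Psi>"
        show "\<theta> \<in> \<Psi>" unfolding \<theta>_def using dnK_mem[OF c(1) f] hp c(2) by blast
      qed
      have g2: "gtl (Imp (And a (TX \<theta>)) \<theta>)"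
      proof (rule by_types)
        fix \<Psi> assume c: "cons \<Psi>" "And a (TX \<theta>) \<in> \<Psi>"
        then have "\<theta> \<in> succ_type \<Psi>" using cons_And[OF c(1)] unfolding succ_type_def by blast
        then have n: "\<not> (\<exists>\<Theta>. cons \<Theta> \<and> succ_type \<Psi> \<subseteq> \<Theta> \<and> cclass \<Sigma> \<Theta> \<in> FR)"
          unfolding \<theta>_def using dnK_mem[OF cons_succ_type[OF c(1)] f] by blast
        show "\<theta> \<in> \<Psi>" unfolding \<theta>_def using dnK_mem[OF c(1) f] n cons_succ_type succ_mono FRs by blast
      qed
      have "\<theta> \<in> \<Phi>0" using cons_mp1[OF p0(1) gm(2) g_trans[OF U_monoR[OF g1] U_indR[OF g2]]] .
      then show False unfolding \<theta>_def using dnK_mem[OF p0(1) f] wFR p0(1) by blast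
    qed
  }
  {
    fix a b assume g: "TS a b \<in> qlab \<Sigma> w"
    show "\<exists>v\<in>qW \<Sigma>. \<exists>n. (qRplus \<Sigma> ^^ n) v w \<and> b \<in> qlab \<Sigma> v"
    proof (rule ccontr)
      assume nv: "\<not> ?thesis"
      have gm: "TS a b \<in> \<Sigma>" "TS a b \<in> \<Phi>0" using g p0 qlab_cls unfolding clab_def by blast+
      then have m: "b \<in> \<Sigma>" using s by blast
      have hp: "b \<notin> \<Theta>" if "cons \<Theta>" "cclass \<Sigma> \<Theta> \<in> BR" for \<Theta>
        using nv that qlab_mem[OF that(1) m] unfolding BR_def by blast
      define \<theta> where "\<theta> = dnK \<Sigma> BR"
      have g1: "gtl (Imp b \<theta>)"
      proof (rule by_types)
        fix \<Psi> assume c: "cons \<Psi>" "b \<in> \<Psi>"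
        show "\<theta> \<in> \<Psi>" unfolding \<theta>_def using dnK_mem[OF c(1) f] hp c(2) by blast
      qed
      have g2: "gtl (Imp (And a (TY \<theta>)) \<theta>)"
      proof (rule by_types)
        fix \<Psi> assume c: "cons \<Psi>" "And a (TY \<theta>) \<in> \<Psi>"
        then have "\<theta> \<in> pred_type \<Psi>" using cons_And[OF c(1)] unfolding pred_type_def by blast
        then have n: "\<not> (\<exists>\<Theta>. cons \<Theta> \<and> pred_type \<Psi> \<subseteq> \<Theta> \<and> cclass \<Sigma> \<Theta> \<in> BR)"
          unfolding \<theta>_def using dnK_mem[OF cons_pred_type[OF c(1)] f] by blast
        show "\<theta> \<in> \<Psi>" unfolding \<theta>_def using dnK_mem[OF c(1) f] n cons_pred_type pred_mono BRp by blast
      qed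
      have "\<theta> \<in> \<Phi>0" using cons_mp1[OF p0(1) gm(2) g_trans[OF S_monoR[OF g1] S_indR[OF g2]]] .
      then show False unfolding \<theta>_def using dnK_mem[OF p0(1) f] wBR p0(1) by blast
    qed
  }
qed

theorem corollary10p3:
  assumes "finite \<Sigma>" and "subformula_closed \<Sigma>"
  shows "quasimodel \<Sigma> (qW \<Sigma>) (qle \<Sigma>) (qlab \<Sigma>) (qRplus \<Sigma>)
         \<and> omega_sensible \<Sigma> (qW \<Sigma>) (qlab \<Sigma>) (qRplus \<Sigma>)"
proof -
  have o: "omega_sensible \<Sigma> (qW \<Sigma>) (qlab \<Sigma>) (qRplus \<Sigma>)" using omega[OF assms] .
  have "labelled_system \<Sigma> (qW \<Sigma>) (qle \<Sigma>) (qlab \<Sigma>) (qRplus \<Sigma>)"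
    unfolding labelled_system_def
    using lspace[OF assms(2)] Rplus_W convex confl biserial sensible[OF assms(2)] by blast
  then show ?thesis unfolding quasimodel_def using o by blast
qed


end
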